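(* Let $\delta:\,]0,+\infty[\to\mathbb R$ be nonnegative, bounded and continuously differentiable, and consider $\ddot r+\delta(r)\dot r=-1/r^2$, $r>0$. Fix $T,r_B>0$. Let $\mathcal I$ be the set of $v\in\mathbb R$ such that the solution $r$ with $r(0)=r_B$, $\dot r(0)=v$ is defined (with $r>0$) in the past up to time $t=-T$, and define $\mathfrak R:\mathcal I\to\mathbb R$ by $\mathfrak R(v)=r(-T)$. Then: (i) there exists $\beta\in\mathbb R$ such that $\mathcal I=\,]-\infty,\beta[$; (ii) $\mathfrak R$ is a decreasing diffeomorphism from $]-\infty,\beta[$ onto $]0,+\infty[$; precisely, $\mathfrak R'(v)<0$ for every $v<\beta$, $\lim_{v\to-\infty}\mathfrak R(v)=+\infty$ and $\lim_{v\to\beta^-}\mathfrak R(v)=0$. *)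

theory Defs
  imports "HOL-Analysis.Analysis"
begin

definition past_solution ::
  "(real \<Rightarrow> real) \<Rightarrow> real \<Rightarrow> real \<Rightarrow> real \<Rightarrow> (real \<Rightarrow> real) \<Rightarrow> bool" where
  "past_solution \<delta> T rB v r \<longleftrightarrow>
     (\<exists>r'. (\<forall>t\<in>{-T..0}. 0 < r t
              \<and> (r has_real_derivative r' t) (at t within {-T..0})
              \<and> (r' has_real_derivative (- \<delta> (r t) * r' t - 1 / (r t)^2)) (at t within {-T..0}))
          \<and> r 0 = rB \<and> r' 0 = v)"

definition admissible_velocities :: "(real \<Rightarrow> real) \<Rightarrow> real \<Rightarrow> real \<Rightarrow> real set" where
  "admissible_velocities \<delta> T rB = {v. \<exists>r. past_solution \<delta> T rB v r}"

definition past_position :: "(real \<Rightarrow> real) \<Rightarrow> real \<Rightarrow> real \<Rightarrow> real \<Rightarrow> real" where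
  "past_position \<delta> T rB v = (THE x. \<exists>r. past_solution \<delta> T rB v r \<and> r (-T) = x)"

end

theory Submission
  imports Defs
begin

lemma deriv_nonpos_mono:
  fixes f :: "real \<Rightarrow> real"
  assumes "a \<le> b"
    and d: "\<And>x. x \<in> {a..b} \<Longrightarrow> (f has_real_derivative f' x) (at x within {a..b})"
    and n: "\<And>x. x \<in> {a..b} \<Longrightarrow> f' x \<le> 0"
  shows "f b \<le> f a"
proof -
  have "\<exists>x\<in>{a..b}. f b - f a = f' x * (b - a)"
    using mvt_very_simple[OF assms(1), of f "\<lambda>x h. f' x * h"] d
    by (auto simp: has_field_derivative_def mult_commute_abs)
  then obtain x where "x \<in> {a..b}" "f b - f a = f' x * (b - a)" by auto
  moreover have "f' x * (b - a) \<le> 0" using n[OF \<open>x \<in> _\<close>] assms(1)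
    by (simp add: mult_nonpos_nonneg)
  ultimately show ?thesis by simp
qed

lemma deriv_nonpos_mono':
  fixes f :: "real \<Rightarrow> real"
  assumes d: "\<And>x. x \<in> {a..b} \<Longrightarrow> (f has_real_derivative f' x) (at x within {a..b})"
    and n: "\<And>x. x \<in> {a..b} \<Longrightarrow> f' x \<le> 0"
    and xy: "a \<le> x" "x \<le> y" "y \<le> b"
  shows "f y \<le> f x"
proof (rule deriv_nonpos_mono[OF xy(2)])
  fix t assume t: "t \<in> {x..y}"
  then have "t \<in> {a..b}" using xy by auto
  show "(f has_real_derivative f' t) (at t within {x..y})"
    by (rule DERIV_subset[OF d[OF \<open>t \<in> {a..b}\<close>]]) (use xy in auto)
  show "f' t \<le> 0" using n \<open>t \<in> {a..b}\<close> by auto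
qed

lemma picard:
  fixes F :: "real \<Rightarrow> 'a::banach \<Rightarrow> 'a"
  assumes T: "0 \<le> T"
   and cont: "continuous_on ({0..T} \<times> UNIV) (\<lambda>(t,x). F t x)"
   and lip: "\<And>t x y. t \<in> {0..T} \<Longrightarrow> norm (F t x - F t y) \<le> L * norm (x - y)"
   and L: "0 < L"
  shows "\<exists>x. x 0 = x0 \<and> (\<forall>t\<in>{0..T}. (x has_vector_derivative F t (x t)) (at t within {0..T}))"
proof -
  define K where "K = 2 * L"
  have K: "K > 0" using L by (simp add: K_def)
  define c where "c t = max 0 (min T t)" for t :: real
  have c_in: "c t \<in> {0..T}" for t using T by (auto simp: c_def)
  have c_id: "t \<in> {0..T} \<Longrightarrow> c t = t" for t by (auto simp: c_def)
  have c_cont: "continuous_on UNIV c" unfolding c_def by (intro continuous_intros)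
  define g where "g f s = F s (exp (K * s) *\<^sub>R apply_bcontfun f s)" for f :: "real \<Rightarrow>\<^sub>C 'a" and s
  have gcont: "continuous_on {0..T} (g f)" for f
  proof -
    have "continuous_on {0..T} (\<lambda>s. (\<lambda>(t,x). F t x) (s, exp (K * s) *\<^sub>R apply_bcontfun f s))"
      by (rule continuous_on_compose2[OF cont]) (auto intro!: continuous_intros)
    then show ?thesis by (simp add: g_def)
  qed
  have Ider: "((\<lambda>u. integral {0..u} (g f)) has_vector_derivative g f t) (at t within {0..T})"
    if "t \<in> {0..T}" for f t
    by (rule integral_has_vector_derivative[OF gcont that])
  have Icont: "continuous_on {0..T} (\<lambda>u. integral {0..u} (g f))" for f
    using Ider has_vector_derivative_continuous continuous_on_eq_continuous_within by blast
  define h where "h f u = exp (- K * u) *\<^sub>R (x0 + integral {0..u} (g f))" for f u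
  have hcont: "continuous_on {0..T} (h f)" for f
    unfolding h_def by (intro continuous_intros Icont)
  define Q0 where "Q0 f t = h f (c t)" for f t
  have Q0_bc: "Q0 f \<in> bcontfun" for f
  proof -
    have "continuous_on UNIV (Q0 f)"
      unfolding Q0_def by (rule continuous_on_compose2[OF hcont c_cont]) (use c_in in auto)
    moreover have "bounded (range (Q0 f))"
    proof -
      have "compact (h f ` {0..T})" by (rule compact_continuous_image[OF hcont]) auto
      then have "bounded (h f ` {0..T})" by (rule compact_imp_bounded)
      moreover have "range (Q0 f) \<subseteq> h f ` {0..T}" using c_in by (auto simp: Q0_def)
      ultimately show ?thesis by (rule bounded_subset)
    qed
    ultimately show ?thesis by (simp add: bcontfun_def)
  qed
  define Q where "Q f = Bcontfun (Q0 f)" for f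
  have Qapp: "apply_bcontfun (Q f) = Q0 f" for f
    unfolding Q_def using Q0_bc by (rule Bcontfun_inverse)
  have gint: "g f integrable_on {0..u}" if "u \<in> {0..T}" for f u
    by (rule integrable_continuous_interval, rule continuous_on_subset[OF gcont]) (use that in auto)
  have expint: "((\<lambda>s. exp (K * s)) has_integral (exp (K * u)/K - 1/K)) {0..u}" if "0 \<le> u" for u
  proof -
    have "((\<lambda>s. exp (K * s)) has_integral (exp (K * u)/K - exp (K * 0)/K)) {0..u}"
      by (rule fundamental_theorem_of_calculus[OF that])
         (use K in \<open>auto intro!: derivative_eq_intros simp: has_real_derivative_iff_has_vector_derivative[symmetric]\<close>)
    then show ?thesis by simp
  qed
  have contr: "dist (Q f1) (Q f2) \<le> (1/2) * dist f1 f2" for f1 f2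
  proof (rule dist_bound)
    fix t
    define u where "u = c t"
    have u: "u \<in> {0..T}" using c_in u_def by auto
    define D where "D = dist f1 f2"
    have D: "D \<ge> 0" by (simp add: D_def)
    have pt: "norm (g f1 s - g f2 s) \<le> L * D * exp (K * s)" if s: "s \<in> {0..T}" for s
    proof -
      have "norm (g f1 s - g f2 s) \<le> L * norm (exp (K * s) *\<^sub>R apply_bcontfun f1 s - exp (K * s) *\<^sub>R apply_bcontfun f2 s)"
        unfolding g_def by (rule lip[OF s])
      also have "\<dots> = L * exp (K * s) * dist (apply_bcontfun f1 s) (apply_bcontfun f2 s)"
        by (simp add: dist_norm scaleR_right_diff_distrib[symmetric])
      also have "\<dots> \<le> L * exp (K * s) * D"
        unfolding D_def using L by (intro mult_left_mono dist_bounded) auto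
      finally show ?thesis by (simp add: mult_ac)
    qed
    have "dist (apply_bcontfun (Q f1) t) (apply_bcontfun (Q f2) t) = exp (- K * u) * norm (integral {0..u} (g f1) - integral {0..u} (g f2))"
      by (simp add: Qapp Q0_def h_def u_def[symmetric] dist_norm scaleR_right_diff_distrib[symmetric])
    also have "integral {0..u} (g f1) - integral {0..u} (g f2) = integral {0..u} (\<lambda>s. g f1 s - g f2 s)"
      by (rule integral_diff[symmetric]) (use gint u in auto)
    also have "norm (integral {0..u} (\<lambda>s. g f1 s - g f2 s)) \<le> integral {0..u} (\<lambda>s. L * D * exp (K * s))"
    proof (rule integral_norm_bound_integral)
      show "(\<lambda>s. g f1 s - g f2 s) integrable_on {0..u}" using gint u by (intro integrable_diff) auto
      show "(\<lambda>s. L * D * exp (K * s)) integrable_on {0..u}"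
        using has_integral_mult_right[OF expint[of u], of "L * D"] u by (auto simp: integrable_on_def)
      show "norm (g f1 s - g f2 s) \<le> L * D * exp (K * s)" if "s \<in> {0..u}" for s
        using pt that u by auto
    qed
    also have "integral {0..u} (\<lambda>s. L * D * exp (K * s)) = L * D * (exp (K * u)/K - 1/K)"
      using expint u by (auto intro!: integral_unique has_integral_mult_right)
    finally have "dist (apply_bcontfun (Q f1) t) (apply_bcontfun (Q f2) t) \<le> exp (- K * u) * (L * D * (exp (K * u)/K - 1/K))"
      by (simp add: mult_left_mono)
    also have "\<dots> = L * D / K * (1 - exp (- K * u))"
      using K by (simp add: field_simps exp_minus)
    also have "\<dots> \<le> L * D / K"
      using K L D by (intro mult_left_le) auto
    also have "\<dots> = (1/2) * dist f1 f2" using L by (simp add: K_def D_def)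
    finally show "dist (apply_bcontfun (Q f1) t) (apply_bcontfun (Q f2) t) \<le> (1/2) * dist f1 f2" .
  qed
  obtain f where Qfix: "Q f = f"
    using banach_fix_type[of "1/2" Q] contr by auto
  define x where "x t = exp (K * t) *\<^sub>R apply_bcontfun f t" for t
  have xeq: "x t = x0 + integral {0..t} (g f)" if "t \<in> {0..T}" for t
  proof -
    have "apply_bcontfun f t = Q0 f t" using Qfix Qapp by metis
    then show ?thesis using that by (simp add: x_def Q0_def h_def c_id exp_minus)
  qed
  have gx: "g f s = F s (x s)" for s by (simp add: g_def x_def)
  show ?thesis
  proof (intro exI conjI ballI)
    show "x 0 = x0" using xeq[of 0] T by simp
    fix t assume t: "t \<in> {0..T}"
    have d: "((\<lambda>u. x0 + integral {0..u} (g f)) has_vector_derivative g f t) (at t within {0..T})"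
      using Ider[OF t] by (auto intro!: derivative_eq_intros)
    show "(x has_vector_derivative F t (x t)) (at t within {0..T})"
      using has_vector_derivative_transform[OF t xeq d] by (simp add: gx)
  qed
qed

lemma zero_gronwall:
  fixes u :: "real \<Rightarrow> real"
  assumes d: "\<And>s. s \<in> {a..b} \<Longrightarrow> (u has_real_derivative u' s) (at s within {a..b})"
    and le: "\<And>s. s \<in> {a..b} \<Longrightarrow> u' s \<le> L * u s"
    and nn: "\<And>s. s \<in> {a..b} \<Longrightarrow> u s \<ge> 0"
    and u0: "u a = 0"
    and t: "t \<in> {a..b}"
  shows "u t = 0"
proof -
  define k where "k s = u s * exp (- L * s)" for s
  have "k t \<le> k a"
  proof (rule deriv_nonpos_mono'[of a b k "\<lambda>s. (u' s - L * u s) * exp (- L * s)"])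
    fix s assume s: "s \<in> {a..b}"
    show "(k has_real_derivative (u' s - L * u s) * exp (- L * s)) (at s within {a..b})"
      unfolding k_def by (rule derivative_eq_intros d[OF s] refl)+ (simp add: algebra_simps)
    show "(u' s - L * u s) * exp (- L * s) \<le> 0"
      using le[OF s] by (simp add: mult_nonpos_nonneg)
  qed (use t in auto)
  then have "u t * exp (- L * t) \<le> 0" by (simp add: k_def u0)
  then have "u t \<le> 0" by (simp add: mult_le_0_iff)
  with nn[OF t] show ?thesis by simp
qed

lemma negsq_deriv_at:
  "((\<lambda>y::real. (max (-y) 0)^2) has_real_derivative (-2 * max (-y) 0)) (at y)"
proof -
  consider "y < 0" | "y > 0" | "y = 0" by linarith
  then show ?thesis
  proof cases
    case 1
    have "((\<lambda>y::real. y^2) has_real_derivative (-2 * max (-y) 0)) (at y)"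
      using 1 by (auto intro!: derivative_eq_intros)
    then show ?thesis
      by (rule has_field_derivative_transform_within_open[where S="{..<0}"]) (use 1 in auto)
  next
    case 2
    have "((\<lambda>y::real. 0) has_real_derivative (-2 * max (-y) 0)) (at y)"
      using 2 by (auto intro!: derivative_eq_intros)
    then show ?thesis
      by (rule has_field_derivative_transform_within_open[where S="{0<..}"]) (use 2 in auto)
  next
    case 3
    have "((\<lambda>z::real. ((max (-z) 0)^2 - (max (-0) 0)^2) / (z - 0)) \<longlongrightarrow> 0) (at 0)"
    proof (rule Lim_null_comparison[where g="\<lambda>z. \<bar>z\<bar>"])
      show "\<forall>\<^sub>F x in at 0. norm (((max (-x) 0)^2 - (max (-0) 0)^2) / (x - 0)) \<le> \<bar>x\<bar>"
        by (intro always_eventually allI) (auto simp: power2_eq_square abs_if divide_simps max_def)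
      show "((\<lambda>z::real. \<bar>z\<bar>) \<longlongrightarrow> 0) (at 0)"
        by (rule tendsto_eq_intros) (auto intro: tendsto_ident_at)
    qed
    then show ?thesis using 3 by (simp add: has_field_derivative_iff)
  qed
qed

lemma negsq_deriv:
  assumes "(y has_real_derivative y') (at t within S)"
  shows "((\<lambda>t. (max (- y t) 0)^2) has_real_derivative (-2 * max (- y t) 0 * y')) (at t within S)"
  using DERIV_chain2[OF negsq_deriv_at assms] by simp

lemma vd_fst:
  assumes "(x has_vector_derivative v) F"
  shows "((\<lambda>t. fst (x t)) has_real_derivative fst v) F"
  using has_derivative_fst[OF assms[unfolded has_vector_derivative_def]]
  by (simp add: has_field_derivative_def mult_commute_abs)

lemma vd_snd:
  assumes "(x has_vector_derivative v) F"
  shows "((\<lambda>t. snd (x t)) has_real_derivative snd v) F"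
  using has_derivative_snd[OF assms[unfolded has_vector_derivative_def]]
  by (simp add: has_field_derivative_def mult_commute_abs)

lemma vd_Pair:
  assumes "(f has_real_derivative a) (at t within S)" "(g has_real_derivative b) (at t within S)"
  shows "((\<lambda>t. (f t, g t)) has_vector_derivative (a, b)) (at t within S)"
  using has_derivative_Pair[OF assms[unfolded has_field_derivative_def]]
  by (simp add: has_vector_derivative_def mult.commute)

lemma norm_pair_le: "norm (a::real, b::real) \<le> \<bar>a\<bar> + \<bar>b\<bar>"
  unfolding norm_Pair by (rule real_le_lsqrt) (auto simp: power2_eq_square abs_mult_self_eq algebra_simps abs_mult[symmetric])

lemma fst_le_norm: "\<bar>fst (p::real\<times>real)\<bar> \<le> norm p"
  by (cases p) (metis fst_conv norm_fst_le real_norm_def)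

lemma snd_le_norm: "\<bar>snd (p::real\<times>real)\<bar> \<le> norm p"
  by (cases p) (metis snd_conv norm_snd_le real_norm_def)

lemma norm_le_fst_snd: "norm (p::real\<times>real) \<le> \<bar>fst p\<bar> + \<bar>snd p\<bar>"
  using norm_pair_le[of "fst p" "snd p"] by simp

lemma gronwall:
  fixes e :: "real \<Rightarrow> 'a::real_inner"
  assumes d: "\<And>s. s \<in> {0..T} \<Longrightarrow> (e has_vector_derivative e' s) (at s within {0..T})"
    and b: "\<And>s. s \<in> {0..T} \<Longrightarrow> norm (e' s) \<le> L * norm (e s) + C"
    and L: "L > 0" and C: "C \<ge> 0" and t: "t \<in> {0..T}"
  shows "norm (e t) \<le> (norm (e 0) + C / L) * exp (L * t) - C / L"
proof -
  have key: "norm (e t) \<le> (norm (e 0) + C / L) * exp (L * t) - C / L + \<eta> * exp (L * t)" if \<eta>: "\<eta> > 0" for \<eta>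
  proof -
    define v where "v s = sqrt (e s \<bullet> e s + \<eta>^2)" for s
    have vpos: "v s > 0" for s unfolding v_def using \<eta> by (intro real_sqrt_gt_zero) (simp add: add_nonneg_pos)
    have nv: "norm (e s) \<le> v s" for s unfolding v_def
      by (rule real_le_rsqrt) (simp add: power2_norm_eq_inner)
    have vd: "(v has_real_derivative (e s \<bullet> e' s) / v s) (at s within {0..T})" if s: "s \<in> {0..T}" for s
    proof -
      have "((\<lambda>s. e s \<bullet> e s) has_derivative (\<lambda>h. e s \<bullet> (h *\<^sub>R e' s) + (h *\<^sub>R e' s) \<bullet> e s)) (at s within {0..T})"
        using d[OF s] unfolding has_vector_derivative_def by (intro has_derivative_inner)
      then have "((\<lambda>s. e s \<bullet> e s) has_real_derivative (2 * (e s \<bullet> e' s))) (at s within {0..T})"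
        unfolding has_field_derivative_def
        by (rule has_derivative_eq_rhs) (auto simp: fun_eq_iff inner_commute algebra_simps)
      then have "((\<lambda>s. e s \<bullet> e s + \<eta>^2) has_real_derivative (2 * (e s \<bullet> e' s))) (at s within {0..T})"
        by (auto intro!: derivative_eq_intros)
      from DERIV_chain2[OF DERIV_real_sqrt this]
      have "(v has_real_derivative inverse (v s) / 2 * (2 * (e s \<bullet> e' s))) (at s within {0..T})"
        using vpos[of s] unfolding v_def[abs_def] by simp
      then show ?thesis by (simp add: field_simps)
    qed
    define k where "k s = (v s + C / L) * exp (- L * s)" for s
    have "k t \<le> k 0"
    proof (rule deriv_nonpos_mono'[of 0 T k "\<lambda>s. ((e s \<bullet> e' s) / v s - L * v s - C) * exp (- L * s)"])
      fix s assume s: "s \<in> {0..T}"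
      show "(k has_real_derivative ((e s \<bullet> e' s) / v s - L * v s - C) * exp (- L * s)) (at s within {0..T})"
        unfolding k_def by (rule derivative_eq_intros vd[OF s] refl)+ (use L in \<open>simp add: algebra_simps\<close>)
      have "(e s \<bullet> e' s) / v s \<le> norm (e s) * norm (e' s) / v s"
        using vpos[of s] by (intro divide_right_mono) (auto intro: norm_cauchy_schwarz)
      also have "\<dots> \<le> norm (e' s)"
        using vpos[of s] nv[of s] by (auto simp: divide_simps mult.commute intro: mult_right_mono)
      also have "\<dots> \<le> L * v s + C" using b[OF s] nv[of s] L
        by (smt (verit) mult_left_mono)
      finally show "((e s \<bullet> e' s) / v s - L * v s - C) * exp (- L * s) \<le> 0"
        by (simp add: mult_nonpos_nonneg)
    qed (use t in auto)
    then have "v t + C / L \<le> (v 0 + C / L) * exp (L * t)"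
      by (simp add: k_def exp_minus field_simps)
    moreover have "v 0 \<le> norm (e 0) + \<eta>"
      unfolding v_def using \<eta>
      by (intro real_le_lsqrt)
         (auto simp: power2_eq_square algebra_simps power2_norm_eq_inner[symmetric] add_nonneg_nonneg)
    ultimately have "v t + C / L \<le> (norm (e 0) + \<eta> + C / L) * exp (L * t)"
      by (smt (verit) exp_gt_zero mult_right_mono)
    then show ?thesis using nv[of t] by (simp add: algebra_simps)
  qed
  show ?thesis
  proof (rule field_le_epsilon)
    fix \<epsilon> :: real assume \<epsilon>: "\<epsilon> > 0"
    show "norm (e t) \<le> (norm (e 0) + C / L) * exp (L * t) - C / L + \<epsilon>"
      using key[of "\<epsilon> / exp (L * t)"] \<epsilon> by simp
  qed
qed

locale sys =
  fixes \<delta> :: "real \<Rightarrow> real" and M T rB :: real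
  assumes nonneg: "\<And>x. x > 0 \<Longrightarrow> \<delta> x \<ge> 0"
    and bnd: "\<And>x. x > 0 \<Longrightarrow> \<delta> x \<le> M"
    and dcont: "continuous_on {0<..} \<delta>"
    and T_pos: "T > 0" and rB_pos: "rB > 0"
begin

lemma M_nonneg: "M \<ge> 0" using nonneg[of 1] bnd[of 1] by simp

definition \<Delta> :: "real \<Rightarrow> real" where
  "\<Delta> = (SOME F. \<forall>x>0. (F has_real_derivative \<delta> x) (at x))"

lemma \<Delta>_deriv: "x > 0 \<Longrightarrow> (\<Delta> has_real_derivative \<delta> x) (at x)"
proof -
  have "\<exists>F. \<forall>x::real. ereal 0 < ereal x \<longrightarrow> ereal x < \<infinity> \<longrightarrow> (F has_vector_derivative \<delta> x) (at x)"
    by (rule einterval_antiderivative)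
       (use dcont in \<open>auto simp: continuous_on_eq_continuous_at\<close>)
  then have "\<exists>F. \<forall>x>0. (F has_real_derivative \<delta> x) (at x)"
    by (auto simp: has_real_derivative_iff_has_vector_derivative)
  from someI_ex[OF this] show "x > 0 \<Longrightarrow> ?thesis" unfolding \<Delta>_def by blast
qed

lemma \<Delta>_mono: assumes "0 < x" "x \<le> y" shows "\<Delta> x \<le> \<Delta> y"
proof -
  have "(\<lambda>t. - \<Delta> t) y \<le> (\<lambda>t. - \<Delta> t) x"
  proof (rule deriv_nonpos_mono[OF assms(2)])
    fix t assume "t \<in> {x..y}"
    then have "t > 0" using assms by auto
    show "((\<lambda>t. - \<Delta> t) has_real_derivative - \<delta> t) (at t within {x..y})"
      using DERIV_subset[OF \<Delta>_deriv[OF \<open>t > 0\<close>], of "{x..y}"]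
      by (auto intro!: derivative_eq_intros)
    show "- \<delta> t \<le> 0" using nonneg[OF \<open>t > 0\<close>] by simp
  qed
  then show ?thesis by simp
qed

lemma \<Delta>_lip: assumes "0 < x" "x \<le> y" shows "\<Delta> y - \<Delta> x \<le> M * (y - x)"
proof -
  have "(\<lambda>t. \<Delta> t - M * t) y \<le> (\<lambda>t. \<Delta> t - M * t) x"
  proof (rule deriv_nonpos_mono[OF assms(2)])
    fix t assume "t \<in> {x..y}"
    then have "t > 0" using assms by auto
    show "((\<lambda>t. \<Delta> t - M * t) has_real_derivative \<delta> t - M) (at t within {x..y})"
      using DERIV_subset[OF \<Delta>_deriv[OF \<open>t > 0\<close>], of "{x..y}"]
      by (auto intro!: derivative_eq_intros)
    show "\<delta> t - M \<le> 0" using bnd[OF \<open>t > 0\<close>] by simp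
  qed
  then show ?thesis by (simp add: algebra_simps)
qed

lemma \<Delta>_lip_abs: assumes "0 < x" "0 < y" shows "\<bar>\<Delta> y - \<Delta> x\<bar> \<le> M * \<bar>y - x\<bar>"
proof (cases "x \<le> y")
  case True then show ?thesis using \<Delta>_lip[OF assms(1) True] \<Delta>_mono[OF assms(1) True] by simp
next
  case False then show ?thesis using \<Delta>_lip[OF assms(2), of x] \<Delta>_mono[OF assms(2), of x] by simp
qed

lemma \<Delta>_cont: "continuous_on {0<..} \<Delta>"
  using \<Delta>_deriv by (meson DERIV_isCont continuous_at_imp_continuous_on greaterThan_iff)

definition G :: "real \<Rightarrow> real \<times> real \<Rightarrow> real \<times> real" where
  "G \<epsilon> X = (snd X + \<Delta> (max (fst X) \<epsilon>), - 1 / (max (fst X) \<epsilon>)^2)"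

definition Lc :: "real \<Rightarrow> real" where "Lc \<epsilon> = 1 + M + 2 / \<epsilon>^3"

lemma Lc_pos: "\<epsilon> > 0 \<Longrightarrow> Lc \<epsilon> > 0"
  using M_nonneg by (simp add: Lc_def add_nonneg_pos)

lemma inv_sq_lip:
  fixes \<epsilon> a b :: real
  assumes "\<epsilon> > 0" "a \<ge> \<epsilon>" "b \<ge> \<epsilon>"
  shows "\<bar>1 / a^2 - 1 / b^2\<bar> \<le> 2 / \<epsilon>^3 * \<bar>a - b\<bar>"
proof -
  have ab: "a > 0" "b > 0" using assms by linarith+
  have e3: "\<epsilon>^3 \<le> a * b^2" "\<epsilon>^3 \<le> a^2 * b"
  proof -
    have ee: "\<epsilon> * \<epsilon> \<le> b * b" "\<epsilon> * \<epsilon> \<le> a * a" using assms by (auto intro: mult_mono)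
    have "\<epsilon> * (\<epsilon> * \<epsilon>) \<le> a * (b * b)" using assms ee by (intro mult_mono) auto
    then show "\<epsilon>^3 \<le> a * b^2" by (simp add: power3_eq_cube power2_eq_square)
    have "\<epsilon> * (\<epsilon> * \<epsilon>) \<le> b * (a * a)" using assms ee by (intro mult_mono) auto
    then show "\<epsilon>^3 \<le> a^2 * b" by (simp add: power3_eq_cube power2_eq_square mult_ac)
  qed
  have eq: "1 / a^2 - 1 / b^2 = (b - a) * (1 / (a * b^2) + 1 / (a^2 * b))"
    using ab by (simp add: divide_simps power2_eq_square) (simp add: algebra_simps)
  have "\<bar>1 / a^2 - 1 / b^2\<bar> = \<bar>a - b\<bar> * (1 / (a * b^2) + 1 / (a^2 * b))"
    unfolding eq using ab by (simp add: abs_mult abs_minus_commute)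
  also have "\<dots> \<le> \<bar>a - b\<bar> * (1 / \<epsilon>^3 + 1 / \<epsilon>^3)"
    using e3 assms ab by (intro mult_left_mono add_mono divide_left_mono) auto
  finally show ?thesis by (simp add: mult_ac)
qed

lemma max_lip: "\<bar>max a e - max b e\<bar> \<le> \<bar>a - (b::real)\<bar>"
  by (simp add: max_def)

lemma G_lip:
  assumes "\<epsilon> > 0"
  shows "norm (G \<epsilon> X - G \<epsilon> Y) \<le> Lc \<epsilon> * norm (X - Y)"
proof -
  define a where "a = max (fst X) \<epsilon>"
  define b where "b = max (fst Y) \<epsilon>"
  have ab: "a \<ge> \<epsilon>" "b \<ge> \<epsilon>" "\<bar>a - b\<bar> \<le> \<bar>fst X - fst Y\<bar>"
    using max_lip by (auto simp: a_def b_def)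
  have n1: "\<bar>fst X - fst Y\<bar> \<le> norm (X - Y)" using fst_le_norm[of "X - Y"] by simp
  have n2: "\<bar>snd X - snd Y\<bar> \<le> norm (X - Y)" using snd_le_norm[of "X - Y"] by simp
  have eq: "G \<epsilon> X - G \<epsilon> Y = (snd X - snd Y + (\<Delta> a - \<Delta> b), 1 / b^2 - 1 / a^2)"
    by (simp add: G_def a_def b_def)
  have "norm (G \<epsilon> X - G \<epsilon> Y) \<le> \<bar>snd X - snd Y + (\<Delta> a - \<Delta> b)\<bar> + \<bar>1 / b^2 - 1 / a^2\<bar>"
    unfolding eq by (rule norm_pair_le)
  also have "\<dots> \<le> (\<bar>snd X - snd Y\<bar> + M * \<bar>a - b\<bar>) + 2 / \<epsilon>^3 * \<bar>b - a\<bar>"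
    using \<Delta>_lip_abs[of b a] inv_sq_lip[of \<epsilon> b a] ab assms by (intro add_mono) auto
  also have "\<dots> \<le> (norm (X - Y) + M * norm (X - Y)) + 2 / \<epsilon>^3 * norm (X - Y)"
    using ab n1 n2 M_nonneg assms
    by (intro add_mono mult_left_mono) (auto simp: abs_minus_commute)
  finally show ?thesis by (simp add: Lc_def algebra_simps)
qed

lemma G_cont: "\<epsilon> > 0 \<Longrightarrow> continuous_on UNIV (G \<epsilon>)"
  unfolding G_def
  by (intro continuous_intros continuous_on_compose2[OF \<Delta>_cont]) auto

definition solves :: "real \<Rightarrow> (real \<Rightarrow> real \<times> real) \<Rightarrow> bool" where
  "solves \<epsilon> x \<longleftrightarrow> (\<forall>t\<in>{0..T}. (x has_vector_derivative G \<epsilon> (x t)) (at t within {0..T}))"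

definition init :: "real \<Rightarrow> real \<times> real" where "init w = (rB, w - \<Delta> rB)"

definition sol :: "real \<Rightarrow> real \<Rightarrow> real \<Rightarrow> real \<times> real" where
  "sol \<epsilon> w = (SOME x. x 0 = init w \<and> solves \<epsilon> x)"

lemma sol_ex: assumes "\<epsilon> > 0" shows "sol \<epsilon> w 0 = init w \<and> solves \<epsilon> (sol \<epsilon> w)"
proof -
  have c: "continuous_on ({0..T} \<times> UNIV) (\<lambda>p. G \<epsilon> (snd p))"
    by (rule continuous_on_compose2[OF G_cont[OF assms]]) (auto intro: continuous_intros)
  have "\<exists>x. x 0 = init w \<and> (\<forall>t\<in>{0..T}. (x has_vector_derivative G \<epsilon> (x t)) (at t within {0..T}))"
    by (rule picard[where L="Lc \<epsilon>"])
       (use T_pos G_lip[OF assms] Lc_pos[OF assms] c in \<open>auto simp: case_prod_beta'\<close>)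
  then have "\<exists>x. x 0 = init w \<and> solves \<epsilon> x" by (simp add: solves_def)
  from someI_ex[OF this] show ?thesis unfolding sol_def .
qed

lemma sol_init: "\<epsilon> > 0 \<Longrightarrow> sol \<epsilon> w 0 = init w" using sol_ex by blast
lemma sol_solves: "\<epsilon> > 0 \<Longrightarrow> solves \<epsilon> (sol \<epsilon> w)" using sol_ex by blast

lemma dependence:
  assumes e: "\<epsilon> > 0" and x: "solves \<epsilon> x" and y: "solves \<epsilon> y" and t: "t \<in> {0..T}"
  shows "norm (x t - y t) \<le> norm (x 0 - y 0) * exp (Lc \<epsilon> * t)"
proof -
  have "norm ((\<lambda>s. x s - y s) t) \<le> (norm ((\<lambda>s. x s - y s) 0) + 0 / Lc \<epsilon>) * exp (Lc \<epsilon> * t) - 0 / Lc \<epsilon>"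
  proof (rule gronwall[where e'="\<lambda>s. G \<epsilon> (x s) - G \<epsilon> (y s)"])
    fix s assume s: "s \<in> {0..T}"
    show "((\<lambda>s. x s - y s) has_vector_derivative G \<epsilon> (x s) - G \<epsilon> (y s)) (at s within {0..T})"
      using x y s unfolding solves_def by (auto intro!: derivative_intros)
    show "norm (G \<epsilon> (x s) - G \<epsilon> (y s)) \<le> Lc \<epsilon> * norm (x s - y s) + 0"
      using G_lip[OF e] by simp
  qed (use t Lc_pos[OF e] in auto)
  then show ?thesis by simp
qed

lemma unique:
  assumes e: "\<epsilon> > 0" and x: "solves \<epsilon> x" and x0: "x 0 = init w" and t: "t \<in> {0..T}"
  shows "x t = sol \<epsilon> w t"
proof -
  have "norm (x t - sol \<epsilon> w t) \<le> norm (x 0 - sol \<epsilon> w 0) * exp (Lc \<epsilon> * t)"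
    by (rule dependence[OF e x sol_solves[OF e] t])
  then show ?thesis using sol_init[OF e] x0 by simp
qed

end

lemma cmp_arith:
  fixes a b D E M K :: real
  assumes M: "M \<ge> 0" and K: "K \<ge> 0" and h1: "a < 0 \<Longrightarrow> D \<ge> M * a" and h2: "a \<ge> 0 \<Longrightarrow> D \<ge> 0"
    and h3: "a < 0 \<Longrightarrow> E \<ge> K * a" and h4: "a \<ge> 0 \<Longrightarrow> E \<ge> 0"
  shows "-2 * max (-a) 0 * (b + D) - 2 * max (-b) 0 * E \<le> (1 + 2*M + K) * ((max (-a) 0)^2 + (max (-b) 0)^2)"
proof -
  define an where "an = max (-a) 0"
  define bn where "bn = max (-b) 0"
  have an: "an \<ge> 0" "a < 0 \<Longrightarrow> an = -a" "a \<ge> 0 \<Longrightarrow> an = 0" by (auto simp: an_def)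
  have bn: "bn \<ge> 0" "b < 0 \<Longrightarrow> bn = -b" "b \<ge> 0 \<Longrightarrow> bn = 0" by (auto simp: bn_def)
  have R: "0 \<le> (1 + 2*M + K) * (an^2 + bn^2)" using M K by simp
  have goal: "-2 * an * (b + D) - 2 * bn * E \<le> (1 + 2*M + K) * (an^2 + bn^2)"
  proof (cases "a < 0")
    case True
    have D: "D \<ge> - M * an" using h1[OF True] an(2)[OF True] by simp
    have E: "E \<ge> - K * an" using h3[OF True] an(2)[OF True] by simp
    have t1: "- 2 * an * D \<le> 2 * M * an^2"
    proof -
      have "an * (- M * an) \<le> an * D" using D an(1) by (rule mult_left_mono)
      then show ?thesis by (simp add: power2_eq_square algebra_simps)
    qed
    have t2: "- 2 * bn * E \<le> 2 * K * (an * bn)"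
    proof -
      have "bn * (- K * an) \<le> bn * E" using E bn(1) by (rule mult_left_mono)
      then show ?thesis by (simp add: algebra_simps)
    qed
    have t3: "- 2 * an * b \<le> 2 * (an * bn)"
    proof -
      have "-b \<le> bn" by (simp add: bn_def)
      then have "an * (-b) \<le> an * bn" using an(1) by (rule mult_left_mono)
      then show ?thesis by (simp add: algebra_simps)
    qed
    have s1: "2 * (an * bn) \<le> an^2 + bn^2"
      using sum_squares_bound[of an bn] by (simp add: power2_eq_square algebra_simps)
    have s2: "2 * K * (an * bn) \<le> K * (an^2 + bn^2)"
      using mult_left_mono[OF s1 K] by (simp add: algebra_simps)
    have s3: "2 * M * an^2 \<le> 2 * M * (an^2 + bn^2)" using M by (simp add: mult_left_mono)
    have e1: "-2 * an * (b + D) - 2 * bn * E = - 2 * an * b + (- 2 * an * D) + (- 2 * bn * E)"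
      by (simp add: algebra_simps)
    have e2: "(1 + 2*M + K) * (an^2 + bn^2) = (an^2 + bn^2) + 2 * M * (an^2 + bn^2) + K * (an^2 + bn^2)"
      by (simp add: algebra_simps)
    show ?thesis unfolding e1 e2 using t1 t2 t3 s1 s2 s3 by linarith
  next
    case False
    have "an = 0" using an(3) False by simp
    moreover have "E \<ge> 0" using h4 False by simp
    ultimately have "-2 * an * (b + D) - 2 * bn * E \<le> 0" using bn(1) by (simp add: mult_nonneg_nonneg)
    with R show ?thesis by linarith
  qed
  then show ?thesis by (simp add: an_def bn_def)
qed

context sys begin

lemma sol_d:
  assumes x: "solves \<epsilon> x" and t: "t \<in> {0..T}"
  shows "((\<lambda>t. fst (x t)) has_real_derivative (snd (x t) + \<Delta> (max (fst (x t)) \<epsilon>))) (at t within {0..T})"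
    and "((\<lambda>t. snd (x t)) has_real_derivative (- 1 / (max (fst (x t)) \<epsilon>)^2)) (at t within {0..T})"
  using vd_fst[OF x[unfolded solves_def, rule_format, OF t]] vd_snd[OF x[unfolded solves_def, rule_format, OF t]]
  by (auto simp: G_def)

lemma compare:
  assumes e: "\<epsilon> > 0" and x: "solves \<epsilon> x" and y: "solves \<epsilon> y"
    and i1: "fst (x 0) = fst (y 0)" and i2: "snd (x 0) \<le> snd (y 0)" and t: "t \<in> {0..T}"
  shows "fst (x t) \<le> fst (y t) \<and> snd (x t) \<le> snd (y t)"
proof -
  define a where "a s = fst (y s) - fst (x s)" for s
  define b where "b s = snd (y s) - snd (x s)" for s
  define mx where "mx s = max (fst (x s)) \<epsilon>" for s
  define my where "my s = max (fst (y s)) \<epsilon>" for s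
  define V where "V s = (max (- a s) 0)^2 + (max (- b s) 0)^2" for s
  define K where "K = 2 / \<epsilon>^3"
  have K: "K \<ge> 0" using e by (simp add: K_def)
  have ad: "(a has_real_derivative b s + (\<Delta> (my s) - \<Delta> (mx s))) (at s within {0..T})" if s: "s \<in> {0..T}" for s
    using DERIV_diff[OF sol_d(1)[OF y s] sol_d(1)[OF x s]]
    unfolding a_def[abs_def] b_def mx_def my_def by (simp add: algebra_simps)
  have bd: "(b has_real_derivative (1 / (mx s)^2 - 1 / (my s)^2)) (at s within {0..T})" if s: "s \<in> {0..T}" for s
    using DERIV_diff[OF sol_d(2)[OF y s] sol_d(2)[OF x s]]
    unfolding b_def[abs_def] mx_def my_def by (simp add: algebra_simps)
  define dV where "dV s = -2 * max (- a s) 0 * (b s + (\<Delta> (my s) - \<Delta> (mx s))) - 2 * max (- b s) 0 * (1 / (mx s)^2 - 1 / (my s)^2)" for s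
  have "V t = 0"
  proof (rule zero_gronwall[where a=0 and b=T and L="1 + 2*M + K" and u'=dV and u=V])
    fix s assume s: "s \<in> {0..T}"
    show "(V has_real_derivative dV s) (at s within {0..T})"
      unfolding V_def[abs_def]
      using DERIV_add[OF negsq_deriv[OF ad[OF s]] negsq_deriv[OF bd[OF s]]] by (simp add: dV_def algebra_simps)
    have mpos: "mx s \<ge> \<epsilon>" "my s \<ge> \<epsilon>" by (auto simp: mx_def my_def)
    show "dV s \<le> (1 + 2*M + K) * V s"
      unfolding V_def dV_def
    proof (rule cmp_arith[OF M_nonneg K])
      assume "a s < 0"
      then have le: "my s \<le> mx s" "mx s - my s \<le> - a s" by (auto simp: a_def mx_def my_def)
      have "M * (mx s - my s) \<le> M * (- a s)" using le(2) M_nonneg by (rule mult_left_mono)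
      then show "\<Delta> (my s) - \<Delta> (mx s) \<ge> M * a s"
        using \<Delta>_lip[of "my s" "mx s"] le mpos e by simp
      have "\<bar>1 / (mx s)^2 - 1 / (my s)^2\<bar> \<le> K * \<bar>mx s - my s\<bar>"
        unfolding K_def by (rule inv_sq_lip[OF e mpos])
      moreover have "K * \<bar>mx s - my s\<bar> \<le> K * (- a s)" using le K by (intro mult_left_mono) auto
      ultimately show "1 / (mx s)^2 - 1 / (my s)^2 \<ge> K * a s" by linarith
    next
      assume "a s \<ge> 0"
      then have le: "mx s \<le> my s" by (auto simp: a_def mx_def my_def)
      show "\<Delta> (my s) - \<Delta> (mx s) \<ge> 0" using \<Delta>_mono[OF _ le] mpos e by simp
      have "(mx s)^2 \<le> (my s)^2" using le mpos e by (intro power_mono) auto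
      moreover have "0 < (my s)^2 * (mx s)^2" using mpos e by simp
      ultimately have "1 / (my s)^2 \<le> 1 / (mx s)^2" by (intro divide_left_mono) auto
      then show "1 / (mx s)^2 - 1 / (my s)^2 \<ge> 0" by simp
    qed
    show "V s \<ge> 0" by (simp add: V_def)
  next
    show "V 0 = 0" using i1 i2 by (simp add: V_def a_def b_def)
  qed (use t in auto)
  then have "max (- a t) 0 = 0" "max (- b t) 0 = 0"
    unfolding V_def by (simp_all add: sum_power2_eq_zero_iff)
  then show ?thesis by (simp add: a_def b_def max_def split: if_splits)
qed

end

context sys begin

definition good :: "real \<Rightarrow> real \<Rightarrow> bool" where
  "good \<epsilon> w \<longleftrightarrow> \<epsilon> > 0 \<and> (\<forall>t\<in>{0..T}. fst (sol \<epsilon> w t) \<ge> \<epsilon>)"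

definition S :: "real set" where "S = {w. \<exists>\<epsilon>. good \<epsilon> w}"

lemma sol0: "\<epsilon> > 0 \<Longrightarrow> fst (sol \<epsilon> w 0) = rB" "\<epsilon> > 0 \<Longrightarrow> snd (sol \<epsilon> w 0) = w - \<Delta> rB"
  using sol_init by (auto simp: init_def)

lemma solves_switch:
  assumes x: "solves \<epsilon>1 x" and ge: "\<And>t. t \<in> {0..T} \<Longrightarrow> fst (x t) \<ge> \<epsilon>1 \<and> fst (x t) \<ge> \<epsilon>2"
  shows "solves \<epsilon>2 x"
  unfolding solves_def
proof
  fix t assume t: "t \<in> {0..T}"
  have "max (fst (x t)) \<epsilon>1 = fst (x t)" "max (fst (x t)) \<epsilon>2 = fst (x t)" using ge[OF t] by auto
  then have "G \<epsilon>1 (x t) = G \<epsilon>2 (x t)" by (simp add: G_def)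
  then show "(x has_vector_derivative G \<epsilon>2 (x t)) (at t within {0..T})"
    using x t unfolding solves_def by metis
qed

lemma sol_switch:
  assumes g: "good \<epsilon>1 w" and e2: "\<epsilon>2 > 0" and ge: "\<And>t. t \<in> {0..T} \<Longrightarrow> fst (sol \<epsilon>1 w t) \<ge> \<epsilon>2"
    and t: "t \<in> {0..T}"
  shows "sol \<epsilon>2 w t = sol \<epsilon>1 w t"
proof -
  have e1: "\<epsilon>1 > 0" using g by (simp add: good_def)
  have "solves \<epsilon>2 (sol \<epsilon>1 w)"
    by (rule solves_switch[OF sol_solves[OF e1]]) (use g ge in \<open>auto simp: good_def\<close>)
  from unique[OF e2 this sol_init[OF e1] t] show ?thesis by simp
qed

lemma good_mono:
  assumes g: "good \<epsilon>1 w" and e2: "0 < \<epsilon>2" "\<epsilon>2 \<le> \<epsilon>1"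
  shows "good \<epsilon>2 w" and "\<And>t. t \<in> {0..T} \<Longrightarrow> sol \<epsilon>2 w t = sol \<epsilon>1 w t"
proof -
  have ge: "fst (sol \<epsilon>1 w t) \<ge> \<epsilon>2" if "t \<in> {0..T}" for t
  proof -
    have "fst (sol \<epsilon>1 w t) \<ge> \<epsilon>1" using g that by (simp add: good_def)
    then show ?thesis using e2 by linarith
  qed
  show eq: "\<And>t. t \<in> {0..T} \<Longrightarrow> sol \<epsilon>2 w t = sol \<epsilon>1 w t"
    by (rule sol_switch[OF g e2(1) ge])
  show "good \<epsilon>2 w" using eq ge e2 by (auto simp: good_def)
qed

lemma good_le_rB: assumes "good \<epsilon> w" shows "\<epsilon> \<le> rB"
proof -
  have "(0::real) \<in> {0..T}" using T_pos by simp
  then have "\<epsilon> \<le> fst (sol \<epsilon> w 0)" using assms by (simp add: good_def)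
  then show ?thesis using sol0(1)[of \<epsilon> w] assms by (simp add: good_def)
qed

lemma grow:
  assumes w: "w \<ge> T / rB^2" and t: "t \<in> {0..T}"
  shows "fst (sol rB w t) \<ge> rB + (w - T / rB^2) * t"
proof -
  define x where "x = sol rB w"
  have x: "solves rB x" using sol_solves[OF rB_pos] by (simp add: x_def)
  have x0: "fst (x 0) = rB" "snd (x 0) = w - \<Delta> rB" using sol0[OF rB_pos] by (auto simp: x_def)
  define m where "m s = max (fst (x s)) rB" for s
  have m: "m s \<ge> rB" for s by (simp add: m_def)
  define c where "c = 1 / rB^2"
  have q: "snd (x s) \<ge> (w - \<Delta> rB) - s * c" if s: "s \<in> {0..T}" for s
  proof -
    have "(\<lambda>s. (w - \<Delta> rB) - s * c - snd (x s)) s \<le> (\<lambda>s. (w - \<Delta> rB) - s * c - snd (x s)) 0"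
    proof (rule deriv_nonpos_mono'[where a=0 and b=T and f'="\<lambda>s. - c + 1 / (m s)^2" and f="\<lambda>s. (w - \<Delta> rB) - s * c - snd (x s)"])
      fix u assume u: "u \<in> {0..T}"
      show "((\<lambda>s. (w - \<Delta> rB) - s * c - snd (x s)) has_real_derivative - c + 1 / (m u)^2) (at u within {0..T})"
        using sol_d(2)[OF x u] unfolding m_def by (auto intro!: derivative_eq_intros)
      have "rB^2 \<le> (m u)^2" using m[of u] rB_pos by (intro power_mono) auto
      moreover have "m u > 0" using m[of u] rB_pos by linarith
      ultimately have "1 / (m u)^2 \<le> 1 / rB^2" using rB_pos by (intro divide_left_mono) auto
      then show "- c + 1 / (m u)^2 \<le> 0" by (simp add: c_def)
    qed (use s in auto)
    then show ?thesis using x0 by simp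
  qed
  have "(\<lambda>s. rB + (w - T / rB^2) * s - fst (x s)) t \<le> (\<lambda>s. rB + (w - T / rB^2) * s - fst (x s)) 0"
  proof (rule deriv_nonpos_mono'[where a=0 and b=T and f'="\<lambda>s. (w - T / rB^2) - (snd (x s) + \<Delta> (m s))"
        and f="\<lambda>s. rB + (w - T / rB^2) * s - fst (x s)"])
    fix u assume u: "u \<in> {0..T}"
    show "((\<lambda>s. rB + (w - T / rB^2) * s - fst (x s)) has_real_derivative (w - T / rB^2) - (snd (x u) + \<Delta> (m u))) (at u within {0..T})"
      using sol_d(1)[OF x u] unfolding m_def by (auto intro!: derivative_eq_intros)
    have "\<Delta> rB \<le> \<Delta> (m u)" using \<Delta>_mono[OF rB_pos m[of u]] .
    moreover have "u * c \<le> T / rB^2" using u by (simp add: c_def divide_right_mono)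
    ultimately show "(w - T / rB^2) - (snd (x u) + \<Delta> (m u)) \<le> 0" using q[OF u] by linarith
  qed (use t in auto)
  then show ?thesis using x0 by (simp add: x_def)
qed

lemma good_big: "w \<ge> T / rB^2 \<Longrightarrow> good rB w"
proof -
  assume w: "w \<ge> T / rB^2"
  have "fst (sol rB w t) \<ge> rB" if "t \<in> {0..T}" for t
  proof -
    have "0 \<le> (w - T / rB^2) * t" using w that by (intro mult_nonneg_nonneg) auto
    then show ?thesis using grow[OF w that] by linarith
  qed
  then show ?thesis using rB_pos by (auto simp: good_def)
qed

lemma S_nonempty: "T / rB^2 \<in> S" using good_big[of "T / rB^2"] by (auto simp: S_def)

lemma good_lower:
  assumes g: "good \<epsilon> w" shows "w > - rB / T"
proof (cases "w > 0")
  case True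
  have "rB / T > 0" using T_pos rB_pos by simp
  then show ?thesis using True by linarith
next
  case False
  then have w: "w \<le> 0" by simp
  have e: "\<epsilon> > 0" using g by (simp add: good_def)
  define x where "x = sol \<epsilon> w"
  have x: "solves \<epsilon> x" using sol_solves[OF e] by (simp add: x_def)
  have x0: "fst (x 0) = rB" "snd (x 0) = w - \<Delta> rB" using sol0[OF e] by (auto simp: x_def)
  have xe: "fst (x s) \<ge> \<epsilon>" if "s \<in> {0..T}" for s using g that by (simp add: good_def x_def)
  have mx: "max (fst (x s)) \<epsilon> = fst (x s)" if "s \<in> {0..T}" for s using xe[OF that] by simp
  have q: "snd (x s) \<le> w - \<Delta> rB" if s: "s \<in> {0..T}" for s
  proof -
    have "(\<lambda>s. snd (x s)) s \<le> (\<lambda>s. snd (x s)) 0"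
    proof (rule deriv_nonpos_mono'[where a=0 and b=T and f'="\<lambda>s. - 1 / (max (fst (x s)) \<epsilon>)^2" and f="\<lambda>s. snd (x s)"])
      fix u assume u: "u \<in> {0..T}"
      show "((\<lambda>s. snd (x s)) has_real_derivative - 1 / (max (fst (x u)) \<epsilon>)^2) (at u within {0..T})"
        using sol_d(2)[OF x u] by simp
      show "- 1 / (max (fst (x u)) \<epsilon>)^2 \<le> 0" by simp
    qed (use s in auto)
    then show ?thesis using x0 by simp
  qed
  define \<phi> where "\<phi> s = fst (x s) - rB - w * s" for s
  define d\<phi> where "d\<phi> s = snd (x s) + \<Delta> (fst (x s)) - w" for s
  have \<phi>d: "(\<phi> has_real_derivative d\<phi> s) (at s within {0..T})" if s: "s \<in> {0..T}" for s
    using sol_d(1)[OF x s] unfolding \<phi>_def[abs_def] d\<phi>_def mx[OF s]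
    by (auto intro!: derivative_eq_intros)
  have d\<phi>le: "d\<phi> s \<le> M * max (\<phi> s) 0" if s: "s \<in> {0..T}" for s
  proof -
    have r: "fst (x s) > 0" using xe[OF s] e by simp
    have "\<Delta> (fst (x s)) - \<Delta> rB \<le> M * max (fst (x s) - rB) 0"
    proof (cases "fst (x s) \<ge> rB")
      case True then show ?thesis using \<Delta>_lip[OF rB_pos True] by simp
    next
      case False then show ?thesis using \<Delta>_mono[OF r, of rB] M_nonneg by simp
    qed
    also have "\<dots> \<le> M * max (\<phi> s) 0"
    proof (intro mult_left_mono M_nonneg)
      have "w * s \<le> 0" using w s by (simp add: mult_nonpos_nonneg)
      then show "max (fst (x s) - rB) 0 \<le> max (\<phi> s) 0" by (auto simp: \<phi>_def max_def)
    qed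
    finally show ?thesis using q[OF s] by (simp add: d\<phi>_def)
  qed
  define u where "u s = (max (- (- \<phi> s)) 0)^2" for s
  define du where "du s = -2 * max (- (- \<phi> s)) 0 * (- d\<phi> s)" for s
  have "u T = 0"
  proof (rule zero_gronwall[where a=0 and b=T and L="2 * M" and u'=du and u=u])
    fix s assume s: "s \<in> {0..T}"
    have "((\<lambda>s. - \<phi> s) has_real_derivative - d\<phi> s) (at s within {0..T})"
      using \<phi>d[OF s] by (auto intro!: derivative_eq_intros)
    from negsq_deriv[OF this] show "(u has_real_derivative du s) (at s within {0..T})"
      unfolding u_def[abs_def] du_def by simp
    have "max (\<phi> s) 0 * d\<phi> s \<le> max (\<phi> s) 0 * (M * max (\<phi> s) 0)"
      using d\<phi>le[OF s] by (intro mult_left_mono) auto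
    then show "du s \<le> 2 * M * u s" by (simp add: du_def u_def power2_eq_square algebra_simps)
    show "u s \<ge> 0" by (simp add: u_def)
  next
    show "u 0 = 0" using x0 by (simp add: u_def \<phi>_def)
  qed (use T_pos in auto)
  then have "\<phi> T \<le> 0" by (simp add: u_def max_def split: if_splits)
  moreover have "fst (x T) \<ge> \<epsilon>" using xe T_pos by simp
  ultimately have "rB + w * T > 0" using e by (simp add: \<phi>_def)
  then show ?thesis using T_pos by (simp add: field_simps)
qed

lemma S_lower: "w \<in> S \<Longrightarrow> w > - rB / T"
  using good_lower by (auto simp: S_def)

lemma good_up:
  assumes g: "good \<epsilon> w" and ww: "w \<le> w'"
  shows "good \<epsilon> w'" and "fst (sol \<epsilon> w T) \<le> fst (sol \<epsilon> w' T)"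
proof -
  have e: "\<epsilon> > 0" using g by (simp add: good_def)
  have c: "fst (sol \<epsilon> w t) \<le> fst (sol \<epsilon> w' t)" if "t \<in> {0..T}" for t
    using compare[OF e sol_solves[OF e] sol_solves[OF e] _ _ that] sol0[OF e] ww by auto
  show "good \<epsilon> w'" using c g by (force simp: good_def)
  show "fst (sol \<epsilon> w T) \<le> fst (sol \<epsilon> w' T)" using c T_pos by simp
qed

lemma good_open:
  assumes g: "good \<epsilon> w"
  shows "\<exists>h>0. \<forall>w'. \<bar>w' - w\<bar> < h \<longrightarrow> good (\<epsilon>/2) w' \<and>
           (\<forall>t\<in>{0..T}. norm (sol (\<epsilon>/2) w' t - sol (\<epsilon>/2) w t) \<le> \<bar>w' - w\<bar> * exp (Lc (\<epsilon>/2) * T))"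
proof -
  have e: "\<epsilon> > 0" using g by (simp add: good_def)
  define e2 where "e2 = \<epsilon> / 2"
  have e2: "e2 > 0" "e2 \<le> \<epsilon>" using e by (auto simp: e2_def)
  have g2: "good e2 w" and eq: "\<And>t. t \<in> {0..T} \<Longrightarrow> sol e2 w t = sol \<epsilon> w t"
    using good_mono[OF g e2] by auto
  define E where "E = exp (Lc e2 * T)"
  have E: "E > 0" by (simp add: E_def)
  define h where "h = e2 / E"
  have h: "h > 0" using e2 E by (simp add: h_def)
  have dep: "norm (sol e2 w' t - sol e2 w t) \<le> \<bar>w' - w\<bar> * E" if t: "t \<in> {0..T}" for w' t
  proof -
    have "norm (sol e2 w' t - sol e2 w t) \<le> norm (sol e2 w' 0 - sol e2 w 0) * exp (Lc e2 * t)"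
      by (rule dependence[OF e2(1) sol_solves[OF e2(1)] sol_solves[OF e2(1)] t])
    also have "norm (sol e2 w' 0 - sol e2 w 0) = \<bar>w' - w\<bar>"
      using sol_init[OF e2(1)] by (simp add: init_def)
    also have "exp (Lc e2 * t) \<le> E"
      unfolding E_def using t Lc_pos[OF e2(1)] by (auto intro: mult_left_mono)
    finally show ?thesis by (simp add: mult_left_mono)
  qed
  show ?thesis
  proof (intro exI[of _ h] conjI allI impI h)
    fix w' assume w': "\<bar>w' - w\<bar> < h"
    have lt: "\<bar>w' - w\<bar> * E < e2" using w' E by (simp add: h_def field_simps)
    have "fst (sol e2 w' t) \<ge> e2" if t: "t \<in> {0..T}" for t
    proof -
      have "\<bar>fst (sol e2 w' t) - fst (sol e2 w t)\<bar> \<le> norm (sol e2 w' t - sol e2 w t)"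
        using fst_le_norm[of "sol e2 w' t - sol e2 w t"] by simp
      moreover have "fst (sol e2 w t) \<ge> \<epsilon>" using g t eq[OF t] by (simp add: good_def)
      ultimately show ?thesis using dep[OF t, of w'] lt unfolding e2_def by linarith
    qed
    then show "good (\<epsilon>/2) w'" using e2 by (auto simp: good_def e2_def)
    show "\<forall>t\<in>{0..T}. norm (sol (\<epsilon>/2) w' t - sol (\<epsilon>/2) w t) \<le> \<bar>w' - w\<bar> * exp (Lc (\<epsilon>/2) * T)"
      using dep by (simp add: e2_def E_def)
  qed
qed

end

context sys begin

lemma good_same:
  assumes g1: "good \<epsilon>1 w" and g2: "good \<epsilon>2 w" and t: "t \<in> {0..T}"
  shows "sol \<epsilon>1 w t = sol \<epsilon>2 w t"
proof -
  have e: "\<epsilon>1 > 0" "\<epsilon>2 > 0" using g1 g2 by (auto simp: good_def)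
  have m: "0 < min \<epsilon>1 \<epsilon>2" "min \<epsilon>1 \<epsilon>2 \<le> \<epsilon>1" "min \<epsilon>1 \<epsilon>2 \<le> \<epsilon>2" using e by auto
  have "sol (min \<epsilon>1 \<epsilon>2) w t = sol \<epsilon>1 w t" by (rule good_mono(2)[OF g1 m(1) m(2) t])
  moreover have "sol (min \<epsilon>1 \<epsilon>2) w t = sol \<epsilon>2 w t" by (rule good_mono(2)[OF g2 m(1) m(3) t])
  ultimately show ?thesis by simp
qed

lemma qc:
  assumes g: "good \<epsilon> w" and s: "s \<in> {0..T}"
  shows "fst (sol \<epsilon> w s) \<ge> min rB (fst (sol \<epsilon> w T))"
proof -
  have e: "\<epsilon> > 0" using g by (simp add: good_def)
  define x where "x = sol \<epsilon> w"
  have x: "solves \<epsilon> x" using sol_solves[OF e] by (simp add: x_def)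
  have x0: "fst (x 0) = rB" using sol0[OF e] by (auto simp: x_def)
  have xe: "fst (x t) \<ge> \<epsilon>" if "t \<in> {0..T}" for t using g that by (simp add: good_def x_def)
  have xp: "fst (x t) > 0" if "t \<in> {0..T}" for t using xe[OF that] e by simp
  have mx: "max (fst (x t)) \<epsilon> = fst (x t)" if "t \<in> {0..T}" for t using xe[OF that] by simp
  define \<rho> where "\<rho> t = fst (x t)" for t
  define p where "p t = snd (x t) + \<Delta> (fst (x t))" for t
  have \<rho>d: "(\<rho> has_real_derivative p t) (at t within {0..T})" if t: "t \<in> {0..T}" for t
    using sol_d(1)[OF x t] unfolding \<rho>_def[abs_def] p_def mx[OF t] .
  have pd: "(p has_real_derivative (- 1 / (\<rho> t)^2 + \<delta> (\<rho> t) * p t)) (at t within {0..T})"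
    if t: "t \<in> {0..T}" for t
  proof -
    have "((\<lambda>t. \<Delta> (\<rho> t)) has_real_derivative \<delta> (\<rho> t) * p t) (at t within {0..T})"
      by (rule DERIV_chain2[OF \<Delta>_deriv \<rho>d[OF t]]) (use xp[OF t] in \<open>simp add: \<rho>_def\<close>)
    from DERIV_add[OF sol_d(2)[OF x t] this] show ?thesis
      unfolding p_def[abs_def] \<rho>_def mx[OF t] by simp
  qed
  have A: "p t \<le> p s1" if s1: "s1 \<in> {0..T}" and neg: "p s1 < 0" and t: "t \<in> {s1..T}" for s1 t
  proof -
    define u where "u t = (max (- (p s1 - p t)) 0)^2" for t
    define du where "du t = -2 * max (- (p s1 - p t)) 0 * (- (- 1 / (\<rho> t)^2 + \<delta> (\<rho> t) * p t))" for t
    have "u t = 0"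
    proof (rule zero_gronwall[where a=s1 and b=T and L="2 * M" and u'=du and u=u])
      fix r assume r: "r \<in> {s1..T}"
      then have r0: "r \<in> {0..T}" using s1 by auto
      have "((\<lambda>t. p s1 - p t) has_real_derivative - (- 1 / (\<rho> r)^2 + \<delta> (\<rho> r) * p r)) (at r within {0..T})"
        using pd[OF r0] by (auto intro!: derivative_eq_intros)
      then have "((\<lambda>t. p s1 - p t) has_real_derivative - (- 1 / (\<rho> r)^2 + \<delta> (\<rho> r) * p r)) (at r within {s1..T})"
        by (rule DERIV_subset) (use s1 in auto)
      from negsq_deriv[OF this] show "(u has_real_derivative du r) (at r within {s1..T})"
        unfolding u_def[abs_def] du_def by simp
      define z where "z = max (p r - p s1) 0"
      have z: "z \<ge> 0" by (simp add: z_def)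
      have dz: "du r = 2 * z * (- 1 / (\<rho> r)^2 + \<delta> (\<rho> r) * p r)"
        by (simp add: du_def z_def algebra_simps)
      have "z * (- 1 / (\<rho> r)^2 + \<delta> (\<rho> r) * p r) \<le> z * (M * z)"
      proof (cases "p r > p s1")
        case True
        have d0: "\<delta> (\<rho> r) \<ge> 0" "\<delta> (\<rho> r) \<le> M" using nonneg bnd xp[OF r0] by (auto simp: \<rho>_def)
        have "\<delta> (\<rho> r) * p s1 \<le> 0" using d0 neg by (simp add: mult_nonneg_nonpos)
        moreover have "\<delta> (\<rho> r) * (p r - p s1) \<le> M * (p r - p s1)"
          using d0 True by (intro mult_right_mono) auto
        moreover have "- 1 / (\<rho> r)^2 \<le> 0" by simp
        moreover have "\<delta> (\<rho> r) * p r = \<delta> (\<rho> r) * (p r - p s1) + \<delta> (\<rho> r) * p s1"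
          by (simp add: algebra_simps)
        ultimately have "- 1 / (\<rho> r)^2 + \<delta> (\<rho> r) * p r \<le> M * (p r - p s1)"
          by linarith
        moreover have "z = p r - p s1" using True by (simp add: z_def)
        ultimately have "- 1 / (\<rho> r)^2 + \<delta> (\<rho> r) * p r \<le> M * z" by simp
        then show ?thesis using z by (rule mult_left_mono)
      next
        case False then have "z = 0" by (simp add: z_def)
        then show ?thesis by simp
      qed
      moreover have "u r = z * z" by (simp add: u_def z_def power2_eq_square)
      moreover have "2 * z * (- 1 / (\<rho> r)^2 + \<delta> (\<rho> r) * p r) = 2 * (z * (- 1 / (\<rho> r)^2 + \<delta> (\<rho> r) * p r))"
        by simp
      moreover have "2 * M * u r = 2 * (z * (M * z))" by (simp add: u_def z_def power2_eq_square)
      ultimately show "du r \<le> 2 * M * u r" unfolding dz by linarith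
      show "u r \<ge> 0" by (simp add: u_def)
    next
      show "u s1 = 0" by (simp add: u_def)
    qed (use t in auto)
    then show ?thesis by (simp add: u_def max_def split: if_splits)
  qed
  show ?thesis
  proof (cases "\<forall>t\<in>{0..s}. p t \<ge> 0")
    case True
    have "(\<lambda>t. - \<rho> t) s \<le> (\<lambda>t. - \<rho> t) 0"
    proof (rule deriv_nonpos_mono'[where a=0 and b=s and f="\<lambda>t. - \<rho> t" and f'="\<lambda>t. - p t"])
      fix r assume r: "r \<in> {0..s}"
      then have r0: "r \<in> {0..T}" using s by auto
      have "((\<lambda>t. - \<rho> t) has_real_derivative - p r) (at r within {0..T})"
        using \<rho>d[OF r0] by (auto intro!: derivative_eq_intros)
      then show "((\<lambda>t. - \<rho> t) has_real_derivative - p r) (at r within {0..s})"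
        by (rule DERIV_subset) (use s in auto)
      show "- p r \<le> 0" using True r by auto
    qed (use s in auto)
    then show ?thesis using x0 by (simp add: \<rho>_def x_def)
  next
    case False
    then obtain t where t: "t \<in> {0..s}" "p t < 0" by auto
    have t0: "t \<in> {0..T}" using t s by auto
    have "\<rho> T \<le> \<rho> s"
    proof (rule deriv_nonpos_mono'[where a=s and b=T and f="\<rho>" and f'="p"])
      fix r assume r: "r \<in> {s..T}"
      then have r0: "r \<in> {0..T}" using s by auto
      show "(\<rho> has_real_derivative p r) (at r within {s..T})"
        by (rule DERIV_subset[OF \<rho>d[OF r0]]) (use s in auto)
      have "p r \<le> p t" by (rule A[OF t0 t(2)]) (use r t in auto)
      then show "p r \<le> 0" using t by simp
    qed (use s in auto)
    then show ?thesis by (simp add: \<rho>_def x_def)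
  qed
qed

lemma S_up: "w \<in> S \<Longrightarrow> w \<le> w' \<Longrightarrow> w' \<in> S"
  using good_up(1) by (auto simp: S_def)

lemma S_bdd: "bdd_below S"
  using S_lower by (meson bdd_belowI less_imp_le)

definition \<alpha> :: real where "\<alpha> = Inf S"

lemma S_eq: "S = {\<alpha><..}"
proof
  show "S \<subseteq> {\<alpha><..}"
  proof
    fix w assume w: "w \<in> S"
    then obtain \<epsilon> where g: "good \<epsilon> w" by (auto simp: S_def)
    obtain h where h: "h > 0" "\<And>w'. \<bar>w' - w\<bar> < h \<Longrightarrow> good (\<epsilon>/2) w'"
      using good_open[OF g] by blast
    have "\<bar>(w - h/2) - w\<bar> < h" using h by simp
    then have "w - h/2 \<in> S" using h(2) unfolding S_def by blast
    then have "\<alpha> \<le> w - h/2" unfolding \<alpha>_def by (rule cInf_lower[OF _ S_bdd])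
    then show "w \<in> {\<alpha><..}" using h by simp
  qed
  show "{\<alpha><..} \<subseteq> S"
  proof
    fix w assume "w \<in> {\<alpha><..}"
    then have "Inf S < w" by (simp add: \<alpha>_def)
    then obtain w0 where "w0 \<in> S" "w0 < w"
      using cInf_lessD[of S w] S_nonempty by blast
    then show "w \<in> S" using S_up by auto
  qed
qed

definition Rf :: "real \<Rightarrow> real" where "Rf w = fst (sol (SOME \<epsilon>. good \<epsilon> w) w T)"

lemma Rf_eq: assumes g: "good \<epsilon> w" shows "Rf w = fst (sol \<epsilon> w T)"
proof -
  have "good (SOME \<epsilon>. good \<epsilon> w) w" using g by (rule someI)
  from good_same[OF this g] T_pos show ?thesis by (simp add: Rf_def)
qed

lemma Rf_pos: "w \<in> S \<Longrightarrow> Rf w > 0"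
proof -
  assume "w \<in> S"
  then obtain \<epsilon> where g: "good \<epsilon> w" by (auto simp: S_def)
  then have "fst (sol \<epsilon> w T) \<ge> \<epsilon>" "\<epsilon> > 0" using T_pos by (auto simp: good_def)
  then show ?thesis using Rf_eq[OF g] by simp
qed

lemma Rf_mono: assumes "w \<in> S" "w \<le> w'" shows "Rf w \<le> Rf w'"
proof -
  obtain \<epsilon> where g: "good \<epsilon> w" using assms by (auto simp: S_def)
  show ?thesis using good_up[OF g assms(2)] Rf_eq[OF g] Rf_eq[of \<epsilon> w'] by simp
qed

lemma Rf_cont: assumes "w \<in> S" shows "isCont Rf w"
proof -
  obtain \<epsilon> where g: "good \<epsilon> w" using assms by (auto simp: S_def)
  have e: "\<epsilon> > 0" using g by (simp add: good_def)
  obtain h where h: "h > 0" and hh: "\<And>w'. \<bar>w' - w\<bar> < h \<Longrightarrow> good (\<epsilon>/2) w' \<and>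
           (\<forall>t\<in>{0..T}. norm (sol (\<epsilon>/2) w' t - sol (\<epsilon>/2) w t) \<le> \<bar>w' - w\<bar> * exp (Lc (\<epsilon>/2) * T))"
    using good_open[OF g] by blast
  define E where "E = exp (Lc (\<epsilon>/2) * T)"
  have E: "E > 0" by (simp add: E_def)
  have gw: "good (\<epsilon>/2) w" using hh[of w] h by simp
  have bound: "\<bar>Rf w' - Rf w\<bar> \<le> \<bar>w' - w\<bar> * E" if "\<bar>w' - w\<bar> < h" for w'
  proof -
    have "\<bar>Rf w' - Rf w\<bar> = \<bar>fst (sol (\<epsilon>/2) w' T - sol (\<epsilon>/2) w T)\<bar>"
      using Rf_eq[OF gw] Rf_eq[of "\<epsilon>/2" w'] hh[OF that] by simp
    also have "\<dots> \<le> norm (sol (\<epsilon>/2) w' T - sol (\<epsilon>/2) w T)" by (rule fst_le_norm)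
    also have "\<dots> \<le> \<bar>w' - w\<bar> * E" using hh[OF that] T_pos by (simp add: E_def)
    finally show ?thesis .
  qed
  show ?thesis unfolding isCont_def LIM_eq
  proof (intro allI impI)
    fix r :: real assume r: "r > 0"
    show "\<exists>s>0. \<forall>x. x \<noteq> w \<and> norm (x - w) < s \<longrightarrow> norm (Rf x - Rf w) < r"
    proof (intro exI[of _ "min h (r / E)"] conjI allI impI)
      show "min h (r / E) > 0" using h r E by simp
      fix x assume x: "x \<noteq> w \<and> norm (x - w) < min h (r / E)"
      then have "\<bar>Rf x - Rf w\<bar> \<le> \<bar>x - w\<bar> * E" using bound by simp
      also have "\<dots> < r / E * E" using x E by (intro mult_strict_right_mono) auto
      finally show "norm (Rf x - Rf w) < r" using E by simp
    qed
  qed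
qed

lemma Rf_big: "w \<ge> T / rB^2 \<Longrightarrow> Rf w \<ge> rB + (w - T / rB^2) * T"
  using grow[of w T] Rf_eq[OF good_big] T_pos by simp

lemma Rf_at_top: "filterlim Rf at_top at_top"
proof (subst filterlim_at_top, intro allI)
  fix Z :: real
  show "eventually (\<lambda>w. Z \<le> Rf w) at_top"
  proof (rule eventually_at_top_linorderI[of "max (T / rB^2) ((Z - rB) / T + T / rB^2)"])
    fix w assume w: "max (T / rB^2) ((Z - rB) / T + T / rB^2) \<le> w"
    then have "(Z - rB) / T \<le> w - T / rB^2" by simp
    then have "Z - rB \<le> (w - T / rB^2) * T" using T_pos by (simp add: divide_le_eq)
    then show "Z \<le> Rf w" using Rf_big[of w] w by simp
  qed
qed

lemma Rf_small: assumes c: "c > 0" shows "\<exists>w\<in>S. Rf w < c"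
proof (rule ccontr)
  assume "\<not> ?thesis"
  then have big: "\<And>w. w \<in> S \<Longrightarrow> Rf w \<ge> c" by force
  define e0 where "e0 = min rB c / 2"
  have e0: "e0 > 0" using c rB_pos by (simp add: e0_def)
  have lb: "fst (sol e0 w t) \<ge> 2 * e0" if w: "w \<in> S" and t: "t \<in> {0..T}" for w t
  proof -
    obtain \<epsilon> where g: "good \<epsilon> w" using w by (auto simp: S_def)
    have q: "fst (sol \<epsilon> w t') \<ge> 2 * e0" if "t' \<in> {0..T}" for t'
      using qc[OF g that] Rf_eq[OF g] big[OF w] by (simp add: e0_def)
    have "sol e0 w t = sol \<epsilon> w t"
      by (rule sol_switch[OF g e0 _ t]) (use q e0 in force)
    then show ?thesis using q[OF t] by simp
  qed
  define L where "L = Lc e0"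
  define E where "E = exp (L * T)"
  have E: "E > 0" by (simp add: E_def)
  define w where "w = \<alpha> + min 1 (e0 / E) / 2"
  have wS: "w \<in> S" using S_eq e0 E by (simp add: w_def)
  have "good e0 \<alpha>"
    unfolding good_def
  proof (intro conjI ballI e0)
    fix t assume t: "t \<in> {0..T}"
    have "norm (sol e0 \<alpha> t - sol e0 w t) \<le> norm (sol e0 \<alpha> 0 - sol e0 w 0) * exp (L * t)"
      unfolding L_def by (rule dependence[OF e0 sol_solves[OF e0] sol_solves[OF e0] t])
    also have "norm (sol e0 \<alpha> 0 - sol e0 w 0) = \<bar>\<alpha> - w\<bar>"
      using sol_init[OF e0] by (simp add: init_def)
    also have "exp (L * t) \<le> E"
      unfolding E_def L_def using t Lc_pos[OF e0] by (auto intro: mult_left_mono)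
    finally have n: "norm (sol e0 \<alpha> t - sol e0 w t) \<le> \<bar>\<alpha> - w\<bar> * E" by (simp add: mult_left_mono)
    have "\<bar>\<alpha> - w\<bar> \<le> e0 / E / 2" using E e0 by (simp add: w_def)
    then have "\<bar>\<alpha> - w\<bar> * E \<le> e0 / E / 2 * E" using E by (intro mult_right_mono) auto
    also have "\<dots> = e0 / 2" using E by simp
    finally have "norm (sol e0 \<alpha> t - sol e0 w t) \<le> e0 / 2" using n by linarith
    moreover have "\<bar>fst (sol e0 \<alpha> t) - fst (sol e0 w t)\<bar> \<le> norm (sol e0 \<alpha> t - sol e0 w t)"
      using fst_le_norm[of "sol e0 \<alpha> t - sol e0 w t"] by simp
    ultimately show "fst (sol e0 \<alpha> t) \<ge> e0" using lb[OF wS t] e0 by linarith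
  qed
  then have "\<alpha> \<in> S" by (auto simp: S_def)
  then show False using S_eq by simp
qed

lemma Rf_at_alpha: "(Rf \<longlongrightarrow> 0) (at_right \<alpha>)"
proof (rule tendstoI)
  fix c :: real assume c: "c > 0"
  obtain w0 where w0: "w0 \<in> S" "Rf w0 < c" using Rf_small[OF c] by blast
  have "\<alpha> < w0" using w0 S_eq by auto
  show "eventually (\<lambda>w. dist (Rf w) 0 < c) (at_right \<alpha>)"
    unfolding eventually_at_right[OF \<open>\<alpha> < w0\<close>]
  proof (intro exI[of _ w0] conjI allI impI)
    show "\<alpha> < w0" by fact
    fix w assume w: "\<alpha> < w" "w < w0"
    then have wS: "w \<in> S" using S_eq by simp
    have "0 < Rf w" using Rf_pos[OF wS] .
    moreover have "Rf w \<le> Rf w0" using Rf_mono[OF wS] w by simp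
    ultimately show "dist (Rf w) 0 < c" using w0 by simp
  qed
qed

end

lemma inv_sq_taylor:
  fixes a b e K :: real
  assumes e: "e > 0" and ab: "a \<ge> e" "b \<ge> e" "a \<le> K" "b \<le> K"
  shows "\<bar>1 / a^2 - 1 / b^2 - 2 * (b - a) / a^3\<bar> \<le> 3 * K / e^5 * (b - a)^2"
proof -
  have a: "a > 0" and b: "b > 0" using e ab by linarith+
  have eq: "1 / a^2 - 1 / b^2 - 2 * (b - a) / a^3 = - ((b - a)^2 * (a + 2 * b) / (a^3 * b^2))"
    using a b by (simp add: field_simps power2_eq_square power3_eq_cube)
  have den: "e^5 \<le> a^3 * b^2"
  proof -
    have "e^3 \<le> a^3" "e^2 \<le> b^2" using e ab by (auto intro: power_mono)
    then have "e^3 * e^2 \<le> a^3 * b^2" using e a by (intro mult_mono) auto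
    then show ?thesis by (simp add: power_add[symmetric])
  qed
  have num: "a + 2 * b \<le> 3 * K" "a + 2 * b \<ge> 0" using ab a b by linarith+
  have "\<bar>1 / a^2 - 1 / b^2 - 2 * (b - a) / a^3\<bar> = (b - a)^2 * (a + 2 * b) / (a^3 * b^2)"
    unfolding eq using a b num by simp
  also have "\<dots> \<le> (b - a)^2 * (3 * K) / e^5"
    using den num e a b by (intro frac_le mult_left_mono) auto
  finally show ?thesis by (simp add: mult_ac)
qed

context sys begin

lemma \<Delta>_taylor:
  assumes a: "a > 0" and b: "b > 0"
    and close: "\<And>\<xi>. min a b \<le> \<xi> \<Longrightarrow> \<xi> \<le> max a b \<Longrightarrow> \<bar>\<delta> \<xi> - \<delta> a\<bar> \<le> \<gamma>"
  shows "\<bar>\<Delta> b - \<Delta> a - \<delta> a * (b - a)\<bar> \<le> \<gamma> * \<bar>b - a\<bar>"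
proof (cases a b rule: linorder_cases)
  case less
  obtain \<xi> where \<xi>: "a < \<xi>" "\<xi> < b" "\<Delta> b - \<Delta> a = (b - a) * \<delta> \<xi>"
    using MVT2[OF less, of \<Delta> \<delta>] \<Delta>_deriv a by force
  have "\<bar>\<Delta> b - \<Delta> a - \<delta> a * (b - a)\<bar> = \<bar>\<delta> \<xi> - \<delta> a\<bar> * \<bar>b - a\<bar>"
    unfolding \<xi>(3) by (simp add: abs_mult[symmetric] algebra_simps)
  also have "\<dots> \<le> \<gamma> * \<bar>b - a\<bar>" using close[of \<xi>] \<xi> less by (intro mult_right_mono) auto
  finally show ?thesis .
next
  case equal then show ?thesis by simp
next
  case greater
  obtain \<xi> where \<xi>: "b < \<xi>" "\<xi> < a" "\<Delta> a - \<Delta> b = (a - b) * \<delta> \<xi>"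
    using MVT2[OF greater, of \<Delta> \<delta>] \<Delta>_deriv b by force
  have "\<bar>\<Delta> b - \<Delta> a - \<delta> a * (b - a)\<bar> = \<bar>\<delta> \<xi> - \<delta> a\<bar> * \<bar>b - a\<bar>"
    using \<xi>(3) by (simp add: abs_mult[symmetric] algebra_simps abs_minus_commute)
  also have "\<dots> \<le> \<gamma> * \<bar>b - a\<bar>" using close[of \<xi>] \<xi> greater by (intro mult_right_mono) auto
  finally show ?thesis .
qed

lemma solves_cont: "solves \<epsilon> x \<Longrightarrow> continuous_on {0..T} x"
  unfolding solves_def continuous_on_eq_continuous_within
  using has_vector_derivative_continuous by blast

lemma variational:
  assumes g: "good \<epsilon> w"
  shows "\<exists>Z. Z 0 = (0, 1) \<and>
    (\<forall>t\<in>{0..T}. (Z has_vector_derivative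
        (\<delta> (fst (sol \<epsilon> w t)) * fst (Z t) + snd (Z t), 2 * fst (Z t) / (fst (sol \<epsilon> w t))^3))
        (at t within {0..T})) \<and> fst (Z T) \<ge> T"
proof -
  have e: "\<epsilon> > 0" using g by (simp add: good_def)
  define \<rho> where "\<rho> t = fst (sol \<epsilon> w t)" for t
  have \<rho>e: "\<rho> t \<ge> \<epsilon>" if "t \<in> {0..T}" for t using g that by (simp add: good_def \<rho>_def)
  have \<rho>c: "continuous_on {0..T} \<rho>"
    unfolding \<rho>_def using solves_cont[OF sol_solves[OF e]] by (intro continuous_intros)
  have d\<rho>c: "continuous_on {0..T} (\<lambda>t. \<delta> (\<rho> t))"
    by (rule continuous_on_compose2[OF dcont \<rho>c]) (use \<rho>e e in force)
  define F where "F t z = (\<delta> (\<rho> t) * fst z + snd z, 2 * fst z / (\<rho> t)^3)" for t z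
  have c1: "continuous_on ({0..T} \<times> UNIV) (\<lambda>p::real \<times> (real \<times> real). \<delta> (\<rho> (fst p)))"
    by (rule continuous_on_compose2[OF d\<rho>c continuous_on_fst]) auto
  have c2: "continuous_on ({0..T} \<times> UNIV) (\<lambda>p::real \<times> (real \<times> real). \<rho> (fst p))"
    by (rule continuous_on_compose2[OF \<rho>c continuous_on_fst]) auto
  have Fc: "continuous_on ({0..T} \<times> UNIV) (\<lambda>(t, z). F t z)"
  proof -
    have "continuous_on ({0..T} \<times> UNIV) (\<lambda>p::real \<times> (real \<times> real).
       (\<delta> (\<rho> (fst p)) * fst (snd p) + snd (snd p), 2 * fst (snd p) / (\<rho> (fst p))^3))"
      using c1 c2 \<rho>e e by (intro continuous_intros) force+
    then show ?thesis by (simp add: F_def case_prod_beta')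
  qed
  have Flip: "norm (F t P - F t Q) \<le> (2 * Lc \<epsilon>) * norm (P - Q)" if t: "t \<in> {0..T}" for t P Q
  proof -
    have d: "0 \<le> \<delta> (\<rho> t)" "\<delta> (\<rho> t) \<le> M" using nonneg bnd \<rho>e[OF t] e by (metis less_le_trans)+
    have k: "2 / (\<rho> t)^3 \<le> 2 / \<epsilon>^3" using \<rho>e[OF t] e by (intro divide_left_mono power_mono mult_pos_pos) auto
    have k0: "0 \<le> 2 / (\<rho> t)^3" using \<rho>e[OF t] e by simp
    define u where "u = fst P - fst Q"
    define v where "v = snd P - snd Q"
    have "F t P - F t Q = (\<delta> (\<rho> t) * u + v, 2 / (\<rho> t)^3 * u)"
      by (simp add: F_def u_def v_def algebra_simps diff_divide_distrib)
    then have "norm (F t P - F t Q) \<le> \<bar>\<delta> (\<rho> t) * u + v\<bar> + \<bar>2 / (\<rho> t)^3 * u\<bar>"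
      using norm_pair_le by metis
    also have "\<dots> \<le> (M * \<bar>u\<bar> + \<bar>v\<bar>) + 2 / \<epsilon>^3 * \<bar>u\<bar>"
    proof (intro add_mono)
      have "\<bar>\<delta> (\<rho> t) * u\<bar> \<le> M * \<bar>u\<bar>" using d by (simp add: abs_mult mult_right_mono)
      then show "\<bar>\<delta> (\<rho> t) * u + v\<bar> \<le> M * \<bar>u\<bar> + \<bar>v\<bar>" by linarith
      have "\<bar>2 / (\<rho> t)^3 * u\<bar> = 2 / (\<rho> t)^3 * \<bar>u\<bar>" using k0 by (simp add: abs_mult)
      also have "\<dots> \<le> 2 / \<epsilon>^3 * \<bar>u\<bar>" using k by (rule mult_right_mono) simp
      finally show "\<bar>2 / (\<rho> t)^3 * u\<bar> \<le> 2 / \<epsilon>^3 * \<bar>u\<bar>" .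
    qed
    also have "\<dots> \<le> Lc \<epsilon> * (\<bar>u\<bar> + \<bar>v\<bar>)"
    proof -
      have "Lc \<epsilon> * (\<bar>u\<bar> + \<bar>v\<bar>) = ((M * \<bar>u\<bar> + \<bar>v\<bar>) + 2 / \<epsilon>^3 * \<bar>u\<bar>) + (\<bar>u\<bar> + M * \<bar>v\<bar> + 2 / \<epsilon>^3 * \<bar>v\<bar>)"
        by (simp add: Lc_def algebra_simps add_divide_distrib)
      moreover have "0 \<le> \<bar>u\<bar> + M * \<bar>v\<bar> + 2 / \<epsilon>^3 * \<bar>v\<bar>" using M_nonneg e by simp
      ultimately show ?thesis by linarith
    qed
    also have "\<dots> \<le> Lc \<epsilon> * (2 * norm (P - Q))"
    proof (intro mult_left_mono)
      show "\<bar>u\<bar> + \<bar>v\<bar> \<le> 2 * norm (P - Q)"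
        using fst_le_norm[of "P - Q"] snd_le_norm[of "P - Q"] by (simp add: u_def v_def)
    qed (use Lc_pos[OF e] in simp)
    finally show ?thesis by simp
  qed
  obtain Z where Z0: "Z 0 = (0, 1)" and Zd: "\<And>t. t \<in> {0..T} \<Longrightarrow> (Z has_vector_derivative F t (Z t)) (at t within {0..T})"
    using picard[OF _ Fc Flip, of "(0, 1)"] T_pos Lc_pos[OF e] by force
  define \<eta> where "\<eta> t = fst (Z t)" for t
  define \<zeta> where "\<zeta> t = snd (Z t)" for t
  have \<eta>d: "(\<eta> has_real_derivative \<delta> (\<rho> t) * \<eta> t + \<zeta> t) (at t within {0..T})" if "t \<in> {0..T}" for t
    using vd_fst[OF Zd[OF that]] by (simp add: F_def \<eta>_def[abs_def] \<zeta>_def)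
  have \<zeta>d: "(\<zeta> has_real_derivative 2 / (\<rho> t)^3 * \<eta> t) (at t within {0..T})" if "t \<in> {0..T}" for t
    using vd_snd[OF Zd[OF that]] by (simp add: F_def \<eta>_def \<zeta>_def[abs_def])
  define K where "K = 2 / \<epsilon>^3"
  have K: "K \<ge> 0" using e by (simp add: K_def)
  define V where "V t = (max (- \<eta> t) 0)^2 + (max (- \<zeta> t) 0)^2" for t
  define dV where "dV t = -2 * max (- \<eta> t) 0 * (\<zeta> t + \<delta> (\<rho> t) * \<eta> t) - 2 * max (- \<zeta> t) 0 * (2 / (\<rho> t)^3 * \<eta> t)" for t
  have V0: "V t = 0" if t: "t \<in> {0..T}" for t
  proof (rule zero_gronwall[where a=0 and b=T and L="1 + 2*M + K" and u'=dV and u=V])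
    fix s assume s: "s \<in> {0..T}"
    show "(V has_real_derivative dV s) (at s within {0..T})"
      unfolding V_def[abs_def]
      using DERIV_add[OF negsq_deriv[OF \<eta>d[OF s]] negsq_deriv[OF \<zeta>d[OF s]]] by (simp add: dV_def algebra_simps)
    have d: "0 \<le> \<delta> (\<rho> s)" "\<delta> (\<rho> s) \<le> M" using nonneg bnd \<rho>e[OF s] e by (metis less_le_trans)+
    have k: "2 / (\<rho> s)^3 \<le> K" unfolding K_def using \<rho>e[OF s] e by (intro divide_left_mono power_mono mult_pos_pos) auto
    have k0: "0 \<le> 2 / (\<rho> s)^3" using \<rho>e[OF s] e by simp
    show "dV s \<le> (1 + 2*M + K) * V s"
      unfolding V_def dV_def
    proof (rule cmp_arith[OF M_nonneg K])
      assume n: "\<eta> s < 0"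
      show "\<delta> (\<rho> s) * \<eta> s \<ge> M * \<eta> s" using d n by (simp add: mult_right_mono_neg)
      have "K * \<eta> s \<le> 2 / (\<rho> s)^3 * \<eta> s" using k n by (intro mult_right_mono_neg) auto
      then show "2 / (\<rho> s)^3 * \<eta> s \<ge> K * \<eta> s" by simp
    next
      assume n: "\<eta> s \<ge> 0"
      show "\<delta> (\<rho> s) * \<eta> s \<ge> 0" using d n by simp
      show "2 / (\<rho> s)^3 * \<eta> s \<ge> 0" using k0 n by simp
    qed
    show "V s \<ge> 0" by (simp add: V_def)
  next
    show "V 0 = 0" using Z0 by (simp add: V_def \<eta>_def \<zeta>_def)
  qed (use t in auto)
  have pos: "\<eta> t \<ge> 0 \<and> \<zeta> t \<ge> 0" if t: "t \<in> {0..T}" for t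
    using V0[OF t] unfolding V_def by (simp add: sum_power2_eq_zero_iff max_def split: if_splits)
  have \<zeta>1: "\<zeta> t \<ge> 1" if t: "t \<in> {0..T}" for t
  proof -
    have "(\<lambda>t. - \<zeta> t) t \<le> (\<lambda>t. - \<zeta> t) 0"
    proof (rule deriv_nonpos_mono'[where a=0 and b=T and f="\<lambda>t. - \<zeta> t" and f'="\<lambda>t. - (2 / (\<rho> t)^3 * \<eta> t)"])
      fix s assume s: "s \<in> {0..T}"
      show "((\<lambda>t. - \<zeta> t) has_real_derivative - (2 / (\<rho> s)^3 * \<eta> s)) (at s within {0..T})"
        using \<zeta>d[OF s] by (auto intro!: derivative_eq_intros)
      show "- (2 / (\<rho> s)^3 * \<eta> s) \<le> 0" using pos[OF s] \<rho>e[OF s] e by simp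
    qed (use t in auto)
    then show ?thesis using Z0 by (simp add: \<zeta>_def)
  qed
  have "(\<lambda>t. t - \<eta> t) T \<le> (\<lambda>t. t - \<eta> t) 0"
  proof (rule deriv_nonpos_mono'[where a=0 and b=T and f="\<lambda>t. t - \<eta> t" and f'="\<lambda>t. 1 - (\<delta> (\<rho> t) * \<eta> t + \<zeta> t)"])
    fix s assume s: "s \<in> {0..T}"
    show "((\<lambda>t. t - \<eta> t) has_real_derivative 1 - (\<delta> (\<rho> s) * \<eta> s + \<zeta> s)) (at s within {0..T})"
      using \<eta>d[OF s] by (auto intro!: derivative_eq_intros)
    have "\<delta> (\<rho> s) * \<eta> s \<ge> 0" using pos[OF s] nonneg[of "\<rho> s"] \<rho>e[OF s] e by simp
    then show "1 - (\<delta> (\<rho> s) * \<eta> s + \<zeta> s) \<le> 0" using \<zeta>1[OF s] by simp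
  qed (use T_pos in auto)
  then have "\<eta> T \<ge> T" using Z0 by (simp add: \<eta>_def)
  then show ?thesis
    using Z0 Zd by (intro exI[of _ Z]) (auto simp: F_def \<rho>_def \<eta>_def)
qed

end

lemma deriv_pointwise:
  fixes a a1 q q1 \<eta> \<zeta> h \<gamma> E e K1 M da Da Da1 :: real
  assumes h: "h \<noteq> 0" and e: "e > 0" and a: "a \<ge> e" "a1 \<ge> e" "a \<le> K1" "a1 \<le> K1"
    and d: "0 \<le> da" "da \<le> M" and close: "\<bar>a1 - a\<bar> \<le> \<bar>h\<bar> * E"
    and r1: "\<bar>Da1 - Da - da * (a1 - a)\<bar> \<le> \<gamma> * \<bar>a1 - a\<bar>" and \<gamma>: "\<gamma> \<ge> 0"
  shows "norm ((q1 - q + (Da1 - Da)) / h - (da * \<eta> + \<zeta>), (1 / a^2 - 1 / a1^2) / h - 2 * \<eta> / a^3)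
    \<le> 2 * (1 + M + 2 / e^3) * norm ((a1 - a) / h - \<eta>, (q1 - q) / h - \<zeta>) + (\<gamma> * E + 3 * K1 / e^5 * E^2 * \<bar>h\<bar>)"
proof -
  define u where "u = (a1 - a) / h - \<eta>"
  define v where "v = (q1 - q) / h - \<zeta>"
  define R1 where "R1 = Da1 - Da - da * (a1 - a)"
  define R2 where "R2 = 1 / a^2 - 1 / a1^2 - 2 * (a1 - a) / a^3"
  have a0: "a > 0" "a1 > 0" using a e by linarith+
  have E: "E \<ge> 0"
  proof (rule ccontr)
    assume "\<not> E \<ge> 0"
    then have "\<bar>h\<bar> * E < 0" using h by (simp add: mult_pos_neg)
    moreover have "\<bar>a1 - a\<bar> \<ge> 0" by simp
    ultimately show False using close by linarith
  qed
  have f1: "(q1 - q + (Da1 - Da)) / h - (da * \<eta> + \<zeta>) = v + da * u + R1 / h"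
    using h by (simp add: u_def v_def R1_def field_simps)
  have f2: "(1 / a^2 - 1 / a1^2) / h - 2 * \<eta> / a^3 = 2 / a^3 * u + R2 / h"
    using h a0 by (simp add: u_def R2_def diff_divide_distrib right_diff_distrib)
  have R1b: "\<bar>R1 / h\<bar> \<le> \<gamma> * E"
  proof -
    have "\<bar>R1\<bar> \<le> \<gamma> * (\<bar>h\<bar> * E)" using r1 close \<gamma> unfolding R1_def by (meson mult_left_mono order_trans)
    then show ?thesis using h by (simp add: abs_divide divide_le_eq mult_ac)
  qed
  have R2b: "\<bar>R2 / h\<bar> \<le> 3 * K1 / e^5 * E^2 * \<bar>h\<bar>"
  proof -
    have "\<bar>R2\<bar> \<le> 3 * K1 / e^5 * (a1 - a)^2" unfolding R2_def by (rule inv_sq_taylor[OF e a])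
    also have "(a1 - a)^2 \<le> (\<bar>h\<bar> * E)^2" using close by (metis abs_ge_zero power2_abs power_mono)
    also have "3 * K1 / e^5 \<ge> 0" using a e by simp
    ultimately have "\<bar>R2\<bar> \<le> 3 * K1 / e^5 * (\<bar>h\<bar> * E)^2" by (meson mult_left_mono order_trans)
    then show ?thesis using h by (simp add: abs_divide divide_le_eq power2_eq_square mult_ac)
  qed
  have k: "2 / a^3 \<le> 2 / e^3" "0 \<le> 2 / a^3" using a e a0 by (auto intro!: divide_left_mono power_mono)
  have n1: "\<bar>v + da * u + R1 / h\<bar> \<le> \<bar>v\<bar> + M * \<bar>u\<bar> + \<gamma> * E"
  proof -
    have "\<bar>da * u\<bar> \<le> M * \<bar>u\<bar>" using d by (simp add: abs_mult mult_right_mono)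
    then show ?thesis using R1b by linarith
  qed
  have n2: "\<bar>2 / a^3 * u + R2 / h\<bar> \<le> 2 / e^3 * \<bar>u\<bar> + 3 * K1 / e^5 * E^2 * \<bar>h\<bar>"
  proof -
    have "\<bar>2 / a^3 * u\<bar> = 2 / a^3 * \<bar>u\<bar>" using k by (simp add: abs_mult)
    also have "\<dots> \<le> 2 / e^3 * \<bar>u\<bar>" using k by (intro mult_right_mono) auto
    finally show ?thesis using R2b by linarith
  qed
  have uv: "\<bar>u\<bar> + \<bar>v\<bar> \<le> 2 * norm (u, v)"
    using fst_le_norm[of "(u, v)"] snd_le_norm[of "(u, v)"] by simp
  have "norm ((q1 - q + (Da1 - Da)) / h - (da * \<eta> + \<zeta>), (1 / a^2 - 1 / a1^2) / h - 2 * \<eta> / a^3)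
      \<le> \<bar>v + da * u + R1 / h\<bar> + \<bar>2 / a^3 * u + R2 / h\<bar>"
    unfolding f1 f2 by (rule norm_pair_le)
  also have "\<dots> \<le> (\<bar>v\<bar> + M * \<bar>u\<bar> + 2 / e^3 * \<bar>u\<bar>) + (\<gamma> * E + 3 * K1 / e^5 * E^2 * \<bar>h\<bar>)"
    using n1 n2 by linarith
  also have "\<bar>v\<bar> + M * \<bar>u\<bar> + 2 / e^3 * \<bar>u\<bar> \<le> (1 + M + 2 / e^3) * (\<bar>u\<bar> + \<bar>v\<bar>)"
  proof -
    have "(1 + M + 2 / e^3) * (\<bar>u\<bar> + \<bar>v\<bar>) = (\<bar>v\<bar> + M * \<bar>u\<bar> + 2 / e^3 * \<bar>u\<bar>) + (\<bar>u\<bar> + M * \<bar>v\<bar> + 2 / e^3 * \<bar>v\<bar>)"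
      by (simp add: algebra_simps add_divide_distrib)
    moreover have "0 \<le> \<bar>u\<bar> + M * \<bar>v\<bar> + 2 / e^3 * \<bar>v\<bar>" using d e by simp
    ultimately show ?thesis by linarith
  qed
  also have "(1 + M + 2 / e^3) * (\<bar>u\<bar> + \<bar>v\<bar>) \<le> (1 + M + 2 / e^3) * (2 * norm (u, v))"
    using uv d e by (intro mult_left_mono) auto
  finally have fin: "norm ((q1 - q + (Da1 - Da)) / h - (da * \<eta> + \<zeta>), (1 / a^2 - 1 / a1^2) / h - 2 * \<eta> / a^3)
      \<le> (1 + M + 2 / e^3) * (2 * norm (u, v)) + (\<gamma> * E + 3 * K1 / e^5 * E^2 * \<bar>h\<bar>)" by simp
  have eqn: "(1 + M + 2 / e^3) * (2 * norm (u, v)) = 2 * (1 + M + 2 / e^3) * norm (u, v)" by simp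
  show ?thesis using fin unfolding eqn unfolding u_def v_def .
qed

context sys begin

lemma Rf_deriv:
  assumes wS: "w \<in> S"
  shows "\<exists>D>0. (Rf has_real_derivative D) (at w)"
proof -
  obtain \<epsilon>0 where g0: "good \<epsilon>0 w" using wS by (auto simp: S_def)
  have e0: "\<epsilon>0 > 0" using g0 by (simp add: good_def)
  define e where "e = \<epsilon>0 / 2"
  have e: "e > 0" using e0 by (simp add: e_def)
  obtain h0 where h0: "h0 > 0" and hh0: "\<And>w'. \<bar>w' - w\<bar> < h0 \<Longrightarrow> good (\<epsilon>0/2) w' \<and>
           (\<forall>t\<in>{0..T}. norm (sol (\<epsilon>0/2) w' t - sol (\<epsilon>0/2) w t) \<le> \<bar>w' - w\<bar> * exp (Lc (\<epsilon>0/2) * T))"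
    using good_open[OF g0] by blast
  define E where "E = exp (Lc e * T)"
  have E: "E > 0" by (simp add: E_def)
  have hh: "\<And>w'. \<bar>w' - w\<bar> < h0 \<Longrightarrow> good e w' \<and> (\<forall>t\<in>{0..T}. norm (sol e w' t - sol e w t) \<le> \<bar>w' - w\<bar> * E)"
    using hh0 by (simp add: e_def E_def)
  have g: "good e w" using hh[of w] h0 by simp
  define X where "X = sol e w"
  have Xs: "solves e X" using sol_solves[OF e] by (simp add: X_def)
  have Xe: "fst (X t) \<ge> e" if "t \<in> {0..T}" for t using g that by (simp add: good_def X_def)
  obtain Z where Z0: "Z 0 = (0, 1)"
    and Zd: "\<And>t. t \<in> {0..T} \<Longrightarrow> (Z has_vector_derivative
        (\<delta> (fst (X t)) * fst (Z t) + snd (Z t), 2 * fst (Z t) / (fst (X t))^3)) (at t within {0..T})"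
    and ZT: "fst (Z T) \<ge> T"
    using variational[OF g] unfolding X_def by blast
  have \<rho>c: "continuous_on {0..T} (\<lambda>t. fst (X t))"
    using solves_cont[OF Xs] by (intro continuous_intros)
  obtain tm where tm: "tm \<in> {0..T}" "\<And>t. t \<in> {0..T} \<Longrightarrow> fst (X t) \<le> fst (X tm)"
    using continuous_attains_sup[OF compact_Icc _ \<rho>c] T_pos by auto
  define K1 where "K1 = fst (X tm) + 1"
  have XK: "fst (X t) \<le> K1 - 1" if "t \<in> {0..T}" for t using tm(2)[OF that] by (simp add: K1_def)
  have K1: "K1 \<ge> e + 1" using Xe[OF tm(1)] by (simp add: K1_def)
  define LA where "LA = 2 * (1 + M + 2 / e^3)"
  have LA: "LA > 0" using M_nonneg e by (simp add: LA_def add_pos_nonneg)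
  define B where "B = exp (LA * T) / LA"
  have B: "B > 0" using LA by (simp add: B_def)
  define C2 where "C2 = 3 * K1 / e^5"
  have C2: "C2 > 0" using K1 e by (simp add: C2_def)
  have uc: "uniformly_continuous_on {e..K1} \<delta>"
    by (rule compact_uniformly_continuous[OF continuous_on_subset[OF dcont]]) (use e in auto)
  define D0 where "D0 = fst (Z T)"
  have D0: "D0 > 0" using ZT T_pos by (simp add: D0_def)
  have key: "\<bar>(Rf (w + h) - Rf w) / h - D0\<bar> \<le> (\<gamma> * E + C2 * E^2 * \<bar>h\<bar>) * B"
    if h: "h \<noteq> 0" "\<bar>h\<bar> < h0" "\<bar>h\<bar> * E < d" "\<bar>h\<bar> * E \<le> 1" and \<gamma>: "\<gamma> \<ge> 0"
      and ucd: "\<And>x x'. x \<in> {e..K1} \<Longrightarrow> x' \<in> {e..K1} \<Longrightarrow> \<bar>x' - x\<bar> < d \<Longrightarrow> \<bar>\<delta> x' - \<delta> x\<bar> < \<gamma>"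
    for h \<gamma> d
  proof -
    have hw: "\<bar>(w + h) - w\<bar> < h0" using h by simp
    have gY: "good e (w + h)" using hh[OF hw] by simp
    define Y where "Y = sol e (w + h)"
    have Ys: "solves e Y" using sol_solves[OF e] by (simp add: Y_def)
    have Ye: "fst (Y t) \<ge> e" if "t \<in> {0..T}" for t using gY that by (simp add: good_def Y_def)
    have YX: "norm (Y t - X t) \<le> \<bar>h\<bar> * E" if "t \<in> {0..T}" for t
      using hh[OF hw] that by (simp add: X_def Y_def)
    define Dh where "Dh t = (1 / h) *\<^sub>R (Y t - X t) - Z t" for t
    define Dh' where "Dh' t = (1 / h) *\<^sub>R (G e (Y t) - G e (X t)) -
        (\<delta> (fst (X t)) * fst (Z t) + snd (Z t), 2 * fst (Z t) / (fst (X t))^3)" for t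
    define c where "c = \<gamma> * E + C2 * E^2 * \<bar>h\<bar>"
    have c: "c \<ge> 0" using \<gamma> E C2 by (simp add: c_def)
    have Dd: "(Dh has_vector_derivative Dh' t) (at t within {0..T})" if t: "t \<in> {0..T}" for t
      unfolding Dh_def[abs_def] Dh'_def
      using Ys Xs Zd[OF t] t unfolding solves_def
      by (auto intro!: derivative_eq_intros)
    have Db: "norm (Dh' t) \<le> LA * norm (Dh t) + c" if t: "t \<in> {0..T}" for t
    proof -
      define a where "a = fst (X t)"
      define a1 where "a1 = fst (Y t)"
      have ae: "a \<ge> e" "a1 \<ge> e" using Xe[OF t] Ye[OF t] by (auto simp: a_def a1_def)
      have close: "\<bar>a1 - a\<bar> \<le> \<bar>h\<bar> * E"
        using fst_le_norm[of "Y t - X t"] YX[OF t] by (simp add: a_def a1_def)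
      have aK: "a \<le> K1" "a1 \<le> K1"
        using XK[OF t] close h(4) by (auto simp: a_def abs_le_iff)
      have d0: "0 \<le> \<delta> a" "\<delta> a \<le> M" using nonneg bnd ae e by (metis less_le_trans)+
      have r1: "\<bar>\<Delta> a1 - \<Delta> a - \<delta> a * (a1 - a)\<bar> \<le> \<gamma> * \<bar>a1 - a\<bar>"
      proof (rule \<Delta>_taylor)
        show "a > 0" "a1 > 0" using ae e by linarith+
        fix \<xi> assume \<xi>: "min a a1 \<le> \<xi>" "\<xi> \<le> max a a1"
        have "\<xi> \<in> {e..K1}" "a \<in> {e..K1}" using \<xi> ae aK by auto
        moreover have "\<bar>\<xi> - a\<bar> < d" using \<xi> close h(3) by (auto simp: abs_le_iff)
        ultimately show "\<bar>\<delta> \<xi> - \<delta> a\<bar> \<le> \<gamma>" using ucd by (meson less_imp_le)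
      qed
      have eqD: "Dh t = ((a1 - a) / h - fst (Z t), (snd (Y t) - snd (X t)) / h - snd (Z t))"
        by (simp add: Dh_def a_def a1_def prod_eq_iff divide_inverse mult.commute)
      have mx: "max a e = a" "max a1 e = a1" using ae by auto
      have eqD': "Dh' t = ((snd (Y t) - snd (X t) + (\<Delta> a1 - \<Delta> a)) / h - (\<delta> a * fst (Z t) + snd (Z t)),
                (1 / a^2 - 1 / a1^2) / h - 2 * fst (Z t) / a^3)"
        using mx by (simp add: Dh'_def G_def a_def a1_def prod_eq_iff divide_inverse mult.commute algebra_simps)
      show ?thesis
        unfolding eqD eqD' LA_def c_def C2_def
        by (rule deriv_pointwise[OF h(1) e ae aK d0 close r1 \<gamma>])
    qed
    have "norm (Dh T) \<le> (norm (Dh 0) + c / LA) * exp (LA * T) - c / LA"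
      by (rule gronwall[OF Dd Db LA c]) (use T_pos in auto)
    moreover have "Dh 0 = 0"
    proof -
      have "Y 0 - X 0 = (0, h)" using sol_init[OF e] by (simp add: X_def Y_def init_def)
      then show ?thesis using Z0 h(1) by (simp add: Dh_def)
    qed
    ultimately have "norm (Dh T) \<le> c / LA * exp (LA * T) - c / LA" by simp
    also have "\<dots> \<le> c * B" using c LA by (simp add: B_def)
    finally have nD: "norm (Dh T) \<le> c * B" .
    have "fst (Dh T) = (Rf (w + h) - Rf w) / h - D0"
      using Rf_eq[OF gY] Rf_eq[OF g] by (simp add: Dh_def X_def Y_def D0_def divide_inverse mult.commute)
    then show ?thesis using fst_le_norm[of "Dh T"] nD by (simp add: c_def)
  qed
  have "(Rf has_real_derivative D0) (at w)"
    unfolding has_field_derivative_iff LIM_eq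
  proof (intro allI impI)
    fix r :: real assume r: "r > 0"
    define \<gamma> where "\<gamma> = r / (4 * E * B)"
    have \<gamma>: "\<gamma> > 0" using r E B by (simp add: \<gamma>_def)
    obtain d where d: "d > 0" and ucd: "\<And>x x'. x \<in> {e..K1} \<Longrightarrow> x' \<in> {e..K1} \<Longrightarrow> dist x' x < d \<Longrightarrow> dist (\<delta> x') (\<delta> x) < \<gamma>"
      using uc[unfolded uniformly_continuous_on_def, rule_format, OF \<gamma>] by blast
    define s where "s = min h0 (min (d / (2 * E)) (min (1 / (2 * E)) (r / (4 * C2 * E^2 * B))))"
    have s: "s > 0" using h0 d E r C2 B by (simp add: s_def)
    show "\<exists>s>0. \<forall>x. x \<noteq> w \<and> norm (x - w) < s \<longrightarrow> norm ((Rf x - Rf w) / (x - w) - D0) < r"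
    proof (intro exI[of _ s] conjI allI impI s)
      fix x assume x: "x \<noteq> w \<and> norm (x - w) < s"
      define h where "h = x - w"
      have h: "h \<noteq> 0" "\<bar>h\<bar> < s" using x by (auto simp: h_def)
      have hE: "\<bar>h\<bar> * E < d" "\<bar>h\<bar> * E \<le> 1"
      proof -
        have "\<bar>h\<bar> < d / (2 * E)" "\<bar>h\<bar> < 1 / (2 * E)" using h by (auto simp: s_def)
        then have "\<bar>h\<bar> * E < d / 2" "\<bar>h\<bar> * E < 1 / 2" using E by (auto simp: field_simps)
        then show "\<bar>h\<bar> * E < d" "\<bar>h\<bar> * E \<le> 1" using d by linarith+
      qed
      have kk: "\<bar>(Rf (w + h) - Rf w) / h - D0\<bar> \<le> (\<gamma> * E + C2 * E^2 * \<bar>h\<bar>) * B"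
      proof (rule key[OF h(1) _ hE])
        show "\<bar>h\<bar> < h0" using h by (auto simp: s_def)
        show "\<gamma> \<ge> 0" using \<gamma> by simp
        fix y y' assume "y \<in> {e..K1}" "y' \<in> {e..K1}" "\<bar>y' - y\<bar> < d"
        then show "\<bar>\<delta> y' - \<delta> y\<bar> < \<gamma>" using ucd by (simp add: dist_real_def)
      qed
      have "(\<gamma> * E + C2 * E^2 * \<bar>h\<bar>) * B = r / 4 + C2 * E^2 * B * \<bar>h\<bar>"
        using E B by (simp add: \<gamma>_def algebra_simps)
      also have "C2 * E^2 * B * \<bar>h\<bar> < C2 * E^2 * B * (r / (4 * C2 * E^2 * B))"
        using h C2 E B by (intro mult_strict_left_mono) (auto simp: s_def)
      also have "C2 * E^2 * B * (r / (4 * C2 * E^2 * B)) = r / 4" using C2 E B by simp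
      finally have "\<bar>(Rf (w + h) - Rf w) / h - D0\<bar> < r / 2" using kk by linarith
      then show "norm ((Rf x - Rf w) / (x - w) - D0) < r" using r by (simp add: h_def)
    qed
  qed
  then show ?thesis using D0 by blast
qed

end

context sys begin

lemma good_derivs:
  assumes g: "good \<epsilon> w" and t: "t \<in> {0..T}"
  shows "((\<lambda>s. fst (sol \<epsilon> w s)) has_real_derivative (snd (sol \<epsilon> w t) + \<Delta> (fst (sol \<epsilon> w t)))) (at t within {0..T})"
    and "((\<lambda>s. snd (sol \<epsilon> w s) + \<Delta> (fst (sol \<epsilon> w s))) has_real_derivative
          (- 1 / (fst (sol \<epsilon> w t))^2 + \<delta> (fst (sol \<epsilon> w t)) * (snd (sol \<epsilon> w t) + \<Delta> (fst (sol \<epsilon> w t)))))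
          (at t within {0..T})"
proof -
  have e: "\<epsilon> > 0" using g by (simp add: good_def)
  have x: "solves \<epsilon> (sol \<epsilon> w)" by (rule sol_solves[OF e])
  have xe: "fst (sol \<epsilon> w t) \<ge> \<epsilon>" using g t by (simp add: good_def)
  have mx: "max (fst (sol \<epsilon> w t)) \<epsilon> = fst (sol \<epsilon> w t)" using xe by simp
  show d1: "((\<lambda>s. fst (sol \<epsilon> w s)) has_real_derivative (snd (sol \<epsilon> w t) + \<Delta> (fst (sol \<epsilon> w t)))) (at t within {0..T})"
    using sol_d(1)[OF x t] unfolding mx .
  have "((\<lambda>s. \<Delta> (fst (sol \<epsilon> w s))) has_real_derivative \<delta> (fst (sol \<epsilon> w t)) * (snd (sol \<epsilon> w t) + \<Delta> (fst (sol \<epsilon> w t)))) (at t within {0..T})"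
    by (rule DERIV_chain2[OF \<Delta>_deriv d1]) (use xe e in simp)
  from DERIV_add[OF sol_d(2)[OF x t] this]
  show "((\<lambda>s. snd (sol \<epsilon> w s) + \<Delta> (fst (sol \<epsilon> w s))) has_real_derivative
          (- 1 / (fst (sol \<epsilon> w t))^2 + \<delta> (fst (sol \<epsilon> w t)) * (snd (sol \<epsilon> w t) + \<Delta> (fst (sol \<epsilon> w t)))))
          (at t within {0..T})"
    unfolding mx by simp
qed

lemma reflect_deriv:
  assumes "(f has_real_derivative D) (at (- t) within {a..b})"
  shows "((\<lambda>t. f (- t)) has_real_derivative - D) (at t within {-b..-a})"
proof -
  have "(f has_real_derivative D) (at (uminus t) within (uminus ` {-b..-a}))" using assms by simp
  from DERIV_image_chain[OF this DERIV_minus[OF DERIV_ident]] show ?thesis by (simp add: o_def)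
qed

lemma good_past:
  assumes g: "good \<epsilon> w"
  shows "past_solution \<delta> T rB (- w) (\<lambda>t. fst (sol \<epsilon> w (- t)))"
proof -
  have e: "\<epsilon> > 0" using g by (simp add: good_def)
  define \<rho> where "\<rho> s = fst (sol \<epsilon> w s)" for s
  define p where "p s = snd (sol \<epsilon> w s) + \<Delta> (fst (sol \<epsilon> w s))" for s
  show ?thesis
    unfolding past_solution_def
  proof (intro exI[of _ "\<lambda>t. - p (- t)"] conjI ballI)
    fix t assume t: "t \<in> {-T..0}"
    then have t': "- t \<in> {0..T}" by auto
    have "fst (sol \<epsilon> w (- t)) \<ge> \<epsilon>" using g t' by (simp add: good_def)
    then show "0 < fst (sol \<epsilon> w (- t))" using e by linarith
    have "((\<lambda>t. \<rho> (- t)) has_real_derivative - p (- t)) (at t within {-T..-0})"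
      by (rule reflect_deriv) (use good_derivs(1)[OF g t'] in \<open>simp add: \<rho>_def p_def\<close>)
    then show "((\<lambda>t. fst (sol \<epsilon> w (- t))) has_real_derivative - p (- t)) (at t within {-T..0})"
      by (simp add: \<rho>_def)
    have "((\<lambda>t. p (- t)) has_real_derivative - (- 1 / (\<rho> (- t))^2 + \<delta> (\<rho> (- t)) * p (- t))) (at t within {-T..-0})"
      by (rule reflect_deriv) (use good_derivs(2)[OF g t'] in \<open>simp add: \<rho>_def p_def[abs_def]\<close>)
    from DERIV_minus[OF this]
    show "((\<lambda>t. - p (- t)) has_real_derivative
        (- \<delta> (fst (sol \<epsilon> w (- t))) * - p (- t) - 1 / (fst (sol \<epsilon> w (- t)))^2)) (at t within {-T..0})"
      by (simp add: \<rho>_def algebra_simps)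
  next
    show "fst (sol \<epsilon> w (- 0)) = rB" using sol0[OF e] by simp
    show "- p (- 0) = - w" using sol0[OF e] by (simp add: p_def)
  qed
qed

lemma past_good:
  assumes ps: "past_solution \<delta> T rB v r"
  shows "\<exists>\<epsilon>. good \<epsilon> (- v) \<and> (\<forall>t\<in>{0..T}. fst (sol \<epsilon> (- v) t) = r (- t))"
proof -
  obtain r' where rr: "\<And>t. t \<in> {-T..0} \<Longrightarrow> 0 < r t \<and> (r has_real_derivative r' t) (at t within {-T..0})
      \<and> (r' has_real_derivative (- \<delta> (r t) * r' t - 1 / (r t)^2)) (at t within {-T..0})"
    and r0: "r 0 = rB" and r'0: "r' 0 = v"
    using ps unfolding past_solution_def by blast
  have rc: "continuous_on {-T..0} r"
    unfolding continuous_on_eq_continuous_within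
    using rr DERIV_continuous by blast
  obtain tm where tm: "tm \<in> {-T..0}" "\<And>t. t \<in> {-T..0} \<Longrightarrow> r tm \<le> r t"
    using continuous_attains_inf[OF compact_Icc _ rc] T_pos by auto
  define \<epsilon> where "\<epsilon> = r tm"
  have e: "\<epsilon> > 0" using rr[OF tm(1)] by (simp add: \<epsilon>_def)
  have re: "r (- s) \<ge> \<epsilon>" if "s \<in> {0..T}" for s using tm(2)[of "- s"] that by (simp add: \<epsilon>_def)
  define x where "x s = (r (- s), - r' (- s) - \<Delta> (r (- s)))" for s
  have xs: "solves \<epsilon> x"
    unfolding solves_def
  proof
    fix s assume s: "s \<in> {0..T}"
    then have s': "- s \<in> {-T..0}" by auto
    have mx: "max (r (- s)) \<epsilon> = r (- s)" using re[OF s] by simp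
    have d1: "((\<lambda>s. r (- s)) has_real_derivative - r' (- s)) (at s within {- 0..- (- T)})"
      by (rule reflect_deriv) (use rr[OF s'] in simp)
    have d2: "((\<lambda>s. r' (- s)) has_real_derivative - (- \<delta> (r (- s)) * r' (- s) - 1 / (r (- s))^2)) (at s within {- 0..- (- T)})"
      by (rule reflect_deriv) (use rr[OF s'] in simp)
    have d3: "((\<lambda>s. \<Delta> (r (- s))) has_real_derivative \<delta> (r (- s)) * - r' (- s)) (at s within {- 0..- (- T)})"
      by (rule DERIV_chain2[OF \<Delta>_deriv d1]) (use rr[OF s'] in simp)
    have "(x has_vector_derivative (- r' (- s), - (- (- \<delta> (r (- s)) * r' (- s) - 1 / (r (- s))^2)) - \<delta> (r (- s)) * - r' (- s)))
        (at s within {- 0..- (- T)})"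
      unfolding x_def by (rule vd_Pair[OF d1 DERIV_diff[OF DERIV_minus[OF d2] d3]])
    moreover have "G \<epsilon> (x s) = (- r' (- s), - (- (- \<delta> (r (- s)) * r' (- s) - 1 / (r (- s))^2)) - \<delta> (r (- s)) * - r' (- s))"
      by (simp add: G_def x_def mx algebra_simps)
    ultimately show "(x has_vector_derivative G \<epsilon> (x s)) (at s within {0..T})" by simp
  qed
  have x0: "x 0 = init (- v)" by (simp add: x_def init_def r0 r'0)
  have eq: "sol \<epsilon> (- v) t = x t" if "t \<in> {0..T}" for t
    using unique[OF e xs x0 that] by simp
  have "good \<epsilon> (- v)" using e eq re by (simp add: good_def x_def)
  moreover have "\<forall>t\<in>{0..T}. fst (sol \<epsilon> (- v) t) = r (- t)" using eq by (simp add: x_def)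
  ultimately show ?thesis by blast
qed

lemma adm_iff: "v \<in> admissible_velocities \<delta> T rB \<longleftrightarrow> - v \<in> S"
proof
  assume "v \<in> admissible_velocities \<delta> T rB"
  then obtain r where "past_solution \<delta> T rB v r" by (auto simp: admissible_velocities_def)
  from past_good[OF this] show "- v \<in> S" by (auto simp: S_def)
next
  assume "- v \<in> S"
  then obtain \<epsilon> where "good \<epsilon> (- v)" by (auto simp: S_def)
  from good_past[OF this] show "v \<in> admissible_velocities \<delta> T rB" by (auto simp: admissible_velocities_def)
qed

lemma pp_eq:
  assumes wS: "w \<in> S"
  shows "past_position \<delta> T rB (- w) = Rf w"
proof -
  obtain \<epsilon> where g: "good \<epsilon> w" using wS by (auto simp: S_def)
  have "past_position \<delta> T rB (- w) = fst (sol \<epsilon> w T)"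
    unfolding past_position_def
  proof (rule the_equality)
    show "\<exists>r. past_solution \<delta> T rB (- w) r \<and> r (- T) = fst (sol \<epsilon> w T)"
      using good_past[OF g] by auto
  next
    fix y assume "\<exists>r. past_solution \<delta> T rB (- w) r \<and> r (- T) = y"
    then obtain r where r: "past_solution \<delta> T rB (- w) r" "r (- T) = y" by blast
    obtain \<epsilon>' where g': "good \<epsilon>' w" and eq: "\<forall>t\<in>{0..T}. fst (sol \<epsilon>' w t) = r (- t)"
      using past_good[OF r(1)] by auto
    have "fst (sol \<epsilon>' w T) = y" using eq r(2) T_pos by auto
    moreover have "sol \<epsilon>' w T = sol \<epsilon> w T" using good_same[OF g' g] T_pos by simp
    ultimately show "y = fst (sol \<epsilon> w T)" by simp
  qed
  then show ?thesis using Rf_eq[OF g] by simp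
qed

end

context sys begin

lemma Rf_image: assumes y: "y > 0" shows "\<exists>w\<in>S. Rf w = y"
proof -
  obtain w1 where w1: "w1 \<in> S" "Rf w1 < y" using Rf_small[OF y] by blast
  define w2 where "w2 = max (T / rB^2) ((y - rB) / T + T / rB^2) + 1"
  have w2b: "w2 \<ge> T / rB^2" by (simp add: w2_def)
  have w2S: "w2 \<in> S" using good_big[OF w2b] by (auto simp: S_def)
  have "(y - rB) / T < w2 - T / rB^2" by (simp add: w2_def)
  then have "y - rB < (w2 - T / rB^2) * T" using T_pos by (simp add: divide_less_eq)
  then have w2y: "Rf w2 > y" using Rf_big[OF w2b] by simp
  have le: "w1 \<le> w2"
  proof (rule ccontr)
    assume "\<not> w1 \<le> w2"
    then have "Rf w2 \<le> Rf w1" using Rf_mono[OF w2S] by simp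
    then show False using w1 w2y by simp
  qed
  have sub: "{w1..w2} \<subseteq> S" using w1(1) S_up by auto
  have "continuous_on {w1..w2} Rf"
    using sub Rf_cont by (meson continuous_at_imp_continuous_on subsetD)
  then obtain w where "w1 \<le> w" "w \<le> w2" "Rf w = y"
    using IVT'[of Rf w1 y w2] w1 w2y le by auto
  then show ?thesis using sub by auto
qed

lemma main:
  "\<exists>\<beta>::real. admissible_velocities \<delta> T rB = {..<\<beta>}
           \<and> past_position \<delta> T rB ` {..<\<beta>} = {0<..}
           \<and> (\<forall>v<\<beta>. \<exists>D<0. (past_position \<delta> T rB has_real_derivative D) (at v))
           \<and> filterlim (past_position \<delta> T rB) at_top at_bot
           \<and> (past_position \<delta> T rB \<longlongrightarrow> 0) (at_left \<beta>)"
proof (intro exI[of _ "- \<alpha>"] conjI)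
  define PP where "PP = past_position \<delta> T rB"
  have PPeq: "PP v = Rf (- v)" if "v < - \<alpha>" for v
    using pp_eq[of "- v"] that S_eq by (simp add: PP_def)
  show "admissible_velocities \<delta> T rB = {..< (- \<alpha>)}"
    using adm_iff S_eq by auto
  show "past_position \<delta> T rB ` {..< (- \<alpha>)} = {0<..}"
  proof
    show "past_position \<delta> T rB ` {..< (- \<alpha>)} \<subseteq> {0<..}"
      using PPeq Rf_pos S_eq unfolding PP_def by auto
    show "{0<..} \<subseteq> past_position \<delta> T rB ` {..< (- \<alpha>)}"
    proof
      fix y :: real assume "y \<in> {0<..}"
      then obtain w where w: "w \<in> S" "Rf w = y" using Rf_image by auto
      then have "- w < - \<alpha>" using S_eq by simp
      moreover have "PP (- w) = y" using PPeq[OF \<open>- w < - \<alpha>\<close>] w by simp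
      ultimately show "y \<in> past_position \<delta> T rB ` {..< (- \<alpha>)}"
        unfolding PP_def by (metis image_eqI lessThan_iff)
    qed
  qed
  show "\<forall>v< (- \<alpha>). \<exists>D<0. (past_position \<delta> T rB has_real_derivative D) (at v)"
  proof (intro allI impI)
    fix v assume v: "v < - \<alpha>"
    then have "- v \<in> S" using S_eq by simp
    then obtain D where D: "D > 0" "(Rf has_real_derivative D) (at (- v))" using Rf_deriv by blast
    have "((\<lambda>v. Rf (- v)) has_real_derivative D * (- 1)) (at v)"
      by (rule DERIV_chain2[of Rf D "uminus" v, simplified, OF D(2)]) (auto intro!: derivative_eq_intros)
    then have "(PP has_real_derivative D * (- 1)) (at v)"
      by (rule has_field_derivative_transform_within_open[where S="{..< (- \<alpha>)}"]) (use v PPeq in auto)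
    then show "\<exists>D<0. (past_position \<delta> T rB has_real_derivative D) (at v)"
      using D(1) unfolding PP_def by (intro exI[of _ "D * (- 1)"]) auto
  qed
  show "filterlim (past_position \<delta> T rB) at_top at_bot"
  proof -
    have "filterlim (\<lambda>v. Rf (- v)) at_top at_bot"
      by (rule filterlim_compose[OF Rf_at_top filterlim_uminus_at_top_at_bot])
    moreover have ev: "eventually (\<lambda>v. Rf (- v) = PP v) at_bot"
      unfolding eventually_at_bot_linorder using PPeq by (intro exI[of _ "- \<alpha> - 1"]) auto
    have "filterlim (\<lambda>v. Rf (- v)) at_top at_bot = filterlim PP at_top at_bot"
      by (rule filterlim_cong[OF refl refl ev])
    ultimately have "filterlim PP at_top at_bot" by simp
    then show ?thesis by (simp add: PP_def)
  qed
  show "(past_position \<delta> T rB \<longlongrightarrow> 0) (at_left (- \<alpha>))"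
    unfolding filterlim_at_left_to_right
  proof -
    have "eventually (\<lambda>x. Rf x = PP (- x)) (at_right \<alpha>)"
      using eventually_at_right_less[of \<alpha>] by eventually_elim (use PPeq in auto)
    from tendsto_cong[OF this] Rf_at_alpha
    show "((\<lambda>x. past_position \<delta> T rB (- x)) \<longlongrightarrow> 0) (at_right (- (- \<alpha>)))"
      by (simp add: PP_def)
  qed
qed

end

theorem lemma3p2:
  fixes \<delta> :: "real \<Rightarrow> real" and T rB :: real
  assumes nonneg: "\<And>x. x > 0 \<Longrightarrow> \<delta> x \<ge> 0"
    and bounded: "\<exists>M. \<forall>x>0. \<bar>\<delta> x\<bar> \<le> M"
    and C1: "\<exists>\<delta>'. continuous_on {0<..} \<delta>' \<and> (\<forall>x>0. (\<delta> has_real_derivative \<delta>' x) (at x))"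
    and T_pos: "T > 0" and rB_pos: "rB > 0"
  shows "\<exists>\<beta>::real. admissible_velocities \<delta> T rB = {..<\<beta>}
           \<and> past_position \<delta> T rB ` {..<\<beta>} = {0<..}
           \<and> (\<forall>v<\<beta>. \<exists>D<0. (past_position \<delta> T rB has_real_derivative D) (at v))
           \<and> filterlim (past_position \<delta> T rB) at_top at_bot
           \<and> (past_position \<delta> T rB \<longlongrightarrow> 0) (at_left \<beta>)"
proof -
  obtain M where M: "\<And>x. x > 0 \<Longrightarrow> \<bar>\<delta> x\<bar> \<le> M" using bounded by blast
  obtain \<delta>' where d': "\<And>x. x > 0 \<Longrightarrow> (\<delta> has_real_derivative \<delta>' x) (at x)" using C1 by blast
  have dc: "continuous_on {0<..} \<delta>"
    using d' by (meson DERIV_isCont continuous_at_imp_continuous_on greaterThan_iff)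
  interpret sys \<delta> M T rB
  proof
    show "\<And>x. x > 0 \<Longrightarrow> \<delta> x \<ge> 0" by (rule nonneg)
    show "\<And>x. x > 0 \<Longrightarrow> \<delta> x \<le> M" using M by (meson abs_le_D1)
  qed (use dc T_pos rB_pos in auto)
  show ?thesis by (rule main)
qed

end
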